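(* Let $N<d_x$, with $(x_i,y_i)$ and $\epsilon_i$ sampled independently and $x_i,\epsilon_i$ continuous random vectors. Assume the best Frobenius-norm approximation of $Y$ among matrices of rank at most $p$ is unique. Let $(W_2(t),W_1(t))$ be the gradient flow of $\mathcal L_{base}$ with balanced initialization $W_2(0)^TW_2(0)=W_1(0)W_1(0)^T$, with $\|W_1(0)\|_F\le\delta$ and $\|W_2(0)\|_F\le \delta$ for some $\delta>0$, and assume it converges to a global minimizer of $\mathcal L_{base}$. Then almost surely $$\lim_{t\to\infty}W_2(t)W_1(t)=U_pU_p^TY(X_\epsilon^TX_\epsilon)^{-1}X_\epsilon^T+W(\delta),\qquad \|W(\delta)\|_F\le\big(\sqrt p\,\delta+p^{1/4}\gamma^{1/2}\big)\delta,$$ where $\gamma=\|U_pU_p^TY(X_\epsilon^TX_\epsilon)^{-1}X_\epsilon^T\|_F$.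
   Context: Integers $N,d_x,d_1,d_y\ge1$. Clean inputs $x_1,\dots,x_N\in\mathbb R^{d_x}$, targets $y_1,\dots,y_N\in\mathbb R^{d_y}$, noise vectors $\epsilon_1,\dots,\epsilon_N\in\mathbb R^{d_x}$. $X\in\mathbb R^{d_x\times N}$ has columns $x_i$, $X_\epsilon\in\mathbb R^{d_x\times N}$ has columns $x_i+\epsilon_i$, $Y\in\mathbb R^{d_y\times N}$ has columns $y_i$. A two-layer linear network is a pair $(W_2,W_1)$ with $W_1\in\mathbb R^{d_1\times d_x}$, $W_2\in\mathbb R^{d_y\times d_1}$; $p:=\min(d_x,d_1,d_y)$. Base loss: $\mathcal L_{base}(W_2,W_1)=\|W_2W_1X_\epsilon-Y\|_F^2$. $U_p\in\mathbb R^{d_y\times p}$ is a matrix whose orthonormal columns are eigenvectors of $YY^T$ for its $p$ largest eigenvalues (completed by arbitrary orthonormal vectors if $\mathrm{rank}(Y)<p$). Uniqueness of the best rank-$\le p$ approximation (equivalently $\mathrm{rank}(Y)\le p$ or the $p$-th largest eigenvalue of $YY^T$ exceeds the $(p+1)$-th) makes $U_pU_p^TY$ independent of the choice of $U_p$. Gradient flow of a loss $\mathcal L$: the solution of $\frac{d}{dt}W_i=-\nabla_{W_i}\mathcal L(W_2,W_1)$. *)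

theory Defs
  imports "HOL-Analysis.Analysis" "HOL-Probability.Probability"
begin

text \<open>Matrices are HOL-Analysis matrices: A :: real^'c^'r has rows indexed by 'r and
  columns indexed by 'c, entry A $ r $ c.\<close>

definition frob :: "real^'c^'r \<Rightarrow> real" where
  "frob A = sqrt (\<Sum>r\<in>UNIV. \<Sum>c\<in>UNIV. (A $ r $ c)^2)"

text \<open>On pairs of matrices the inner product is the sum of the
  Frobenius inner products, so its components are the partial gradients.\<close>
definition grad :: "('a::real_inner \<Rightarrow> real) \<Rightarrow> 'a \<Rightarrow> 'a" where
  "grad f x = (SOME g. (f has_derivative (\<lambda>h. inner g h)) (at x))"

text \<open>Data matrices: column i is a sample.\<close>
definition colmat :: "('N \<Rightarrow> real^'d) \<Rightarrow> real^'N^'d" where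
  "colmat v = (\<chi> r c. v c $ r)"

definition Lbase :: "real^'N^'dx \<Rightarrow> real^'N^'dy \<Rightarrow> ((real^'d1^'dy) \<times> (real^'dx^'d1)) \<Rightarrow> real" where
  "Lbase Xe Y W = (frob (fst W ** snd W ** Xe - Y))^2"

definition is_gradient_flow :: "(('a::real_inner) \<Rightarrow> real) \<Rightarrow> (real \<Rightarrow> 'a) \<Rightarrow> bool" where
  "is_gradient_flow L W \<longleftrightarrow>
     (\<forall>t\<ge>0. (W has_vector_derivative (- grad L (W t))) (at t within {0..}))"

definition pdim :: "'dx::finite itself \<Rightarrow> 'd1::finite itself \<Rightarrow> 'dy::finite itself \<Rightarrow> nat" where
  "pdim _ _ _ = min CARD('dx) (min CARD('d1) CARD('dy))"

text \<open>Eigenvectors for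
  eigenvalue 0 are arbitrary orthonormal vectors of the kernel, which covers the
  completion by arbitrary orthonormal vectors when rank(Y) < p.\<close>
definition top_eigvecs :: "real^'n^'n \<Rightarrow> nat \<Rightarrow> (nat \<Rightarrow> real^'n) \<Rightarrow> bool" where
  "top_eigvecs A p u \<longleftrightarrow>
     (\<exists>v \<mu>. (\<forall>i<CARD('n). \<forall>j<CARD('n). inner (v i) (v j) = (if i = j then 1 else 0))
        \<and> (\<forall>i<CARD('n). A *v v i = \<mu> i *\<^sub>R v i)
        \<and> (\<forall>i j. i \<le> j \<longrightarrow> j < CARD('n) \<longrightarrow> \<mu> j \<le> \<mu> i)
        \<and> (\<forall>i<p. u i = v i))"

definition projU :: "nat \<Rightarrow> (nat \<Rightarrow> real^'n) \<Rightarrow> real^'n^'n" where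
  "projU p u = (\<chi> r c. \<Sum>i<p. u i $ r * u i $ c)"

definition unique_best_rank_approx :: "nat \<Rightarrow> real^'c^'r \<Rightarrow> bool" where
  "unique_best_rank_approx p Y \<longleftrightarrow>
     (\<exists>!B. rank B \<le> p \<and> (\<forall>C. rank C \<le> p \<longrightarrow> frob (Y - B) \<le> frob (Y - C)))"

end

theory Submission
  imports Defs
begin


lemma frob_norm: "frob (A::real^'c::finite^'r::finite) = norm A"
  unfolding frob_def norm_vec_def L2_set_def
  by (simp add: real_norm_def power2_abs sum_nonneg)

lemma inner_mat: "inner (A::real^'c::finite^'r::finite) B = (\<Sum>r\<in>UNIV. \<Sum>c\<in>UNIV. A$r$c * B$r$c)"
  by (simp add: inner_vec_def)

lemma norm_mat_sq: "(norm (A::real^'c::finite^'r::finite))^2 = (\<Sum>r\<in>UNIV. \<Sum>c\<in>UNIV. (A$r$c)^2)"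
  unfolding power2_norm_eq_inner inner_mat by (simp add: power2_eq_square)

lemma inner_mmul_right1:
  fixes A :: "real^'c::finite^'r::finite" and B :: "real^'k::finite^'r" and C :: "real^'c^'k"
  shows "inner A (B ** C) = inner (A ** transpose C) B"
  unfolding inner_mat matrix_matrix_mult_def transpose_def
  by (simp add: sum_distrib_left sum_distrib_right mult_ac sum.swap[of _ "UNIV::'c set"])

lemma inner_transpose: "inner (transpose (A::real^'c::finite^'r::finite)) (transpose B) = inner A B"
  unfolding inner_mat transpose_def by (simp add: sum.swap[of _ "UNIV::'c set"])

lemma inner_mmul_right2:
  fixes A :: "real^'c::finite^'r::finite" and B :: "real^'k::finite^'r" and C :: "real^'c^'k"
  shows "inner A (B ** C) = inner (transpose B ** A) C"
proof -
  have "inner A (B ** C) = inner (transpose A) (transpose C ** transpose B)"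
    by (simp add: inner_transpose flip: matrix_transpose_mul)
  also have "\<dots> = inner (transpose A ** B) (transpose C)"
    by (simp add: inner_mmul_right1)
  also have "\<dots> = inner (transpose B ** A) C"
    by (metis inner_transpose matrix_transpose_mul transpose_transpose)
  finally show ?thesis .
qed

lemma matrix_add_rdistrib: "((A::'a::semiring_1^'k^'r) + B) ** C = A ** C + B ** C"
  by (simp add: matrix_matrix_mult_def vec_eq_iff sum.distrib distrib_right)
lemma matrix_diff_rdistrib: "((A::'a::ring_1^'k^'r) - B) ** C = A ** C - B ** C"
  by (simp add: matrix_matrix_mult_def vec_eq_iff sum_subtractf left_diff_distrib)
lemma matrix_diff_ldistrib: "(A::'a::ring_1^'k^'r) ** (B - C) = A ** B - A ** C"
  by (simp add: matrix_matrix_mult_def vec_eq_iff sum_subtractf right_diff_distrib)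
lemma transpose_add: "transpose ((A::'a::semiring_1^'k^'r) + B) = transpose A + transpose B"
  by (simp add: transpose_def vec_eq_iff)
lemma transpose_diff: "transpose ((A::'a::ring_1^'k^'r) - B) = transpose A - transpose B"
  by (simp add: transpose_def vec_eq_iff)

lemma norm_mmul_le:
  fixes A :: "real^'k::finite^'r::finite" and B :: "real^'c::finite^'k"
  shows "norm (A ** B) \<le> norm A * norm B"
proof -
  have "(norm (A ** B))^2 = (\<Sum>r\<in>UNIV. \<Sum>c\<in>UNIV. (inner (A$r) (column c B))^2)"
    unfolding norm_mat_sq matrix_matrix_mult_def column_def inner_vec_def by simp
  also have "\<dots> \<le> (\<Sum>r\<in>UNIV. \<Sum>c\<in>UNIV. (norm (A$r))^2 * (norm (column c B))^2)"
  proof (intro sum_mono)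
    fix r c
    have "\<bar>inner (A$r) (column c B)\<bar> \<le> norm (A$r) * norm (column c B)"
      by (rule Cauchy_Schwarz_ineq2)
    then have "(inner (A$r) (column c B))^2 \<le> (norm (A$r) * norm (column c B))^2"
      by (metis abs_ge_zero power2_abs power_mono)
    then show "(inner (A$r) (column c B))^2 \<le> (norm (A$r))^2 * (norm (column c B))^2"
      by (simp add: power_mult_distrib)
  qed
  also have "\<dots> = (\<Sum>r\<in>UNIV. (norm (A$r))^2) * (\<Sum>c\<in>UNIV. (norm (column c B))^2)"
    by (simp add: sum_product)
  also have "(\<Sum>r\<in>UNIV. (norm (A$r))^2) = (norm A)^2"
    by (simp add: norm_vec_def L2_set_def sum_nonneg)
  also have "(\<Sum>c\<in>UNIV. (norm (column c B))^2) = (norm B)^2"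
  proof -
    have "\<And>c. (norm (column c B))^2 = (\<Sum>k\<in>UNIV. (B$k$c)^2)"
      unfolding power2_norm_eq_inner by (simp add: inner_vec_def column_def power2_eq_square)
    then show ?thesis unfolding norm_mat_sq by (simp only:) (rule sum.swap)
  qed
  finally have "(norm (A ** B))^2 \<le> (norm A * norm B)^2" by (simp add: power_mult_distrib)
  then show ?thesis
    by (rule power2_le_imp_le) simp
qed

lemma bounded_bilinear_mmul:
  "bounded_bilinear ((**) :: real^'k::finite^'r::finite \<Rightarrow> real^'c::finite^'k \<Rightarrow> real^'c^'r)"
proof
  fix a a' :: "real^'k^'r" and b b' :: "real^'c^'k" and r :: real
  show "(a + a') ** b = a ** b + a' ** b" by (rule matrix_add_rdistrib)
  show "a ** (b + b') = a ** b + a ** b'" by (rule matrix_add_ldistrib)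
  show "(r *\<^sub>R a) ** b = r *\<^sub>R (a ** b)"
    by (simp add: matrix_matrix_mult_def vec_eq_iff sum_distrib_left mult_ac)
  show "a ** (r *\<^sub>R b) = r *\<^sub>R (a ** b)"
    by (simp add: matrix_matrix_mult_def vec_eq_iff sum_distrib_left mult_ac)
next
  show "\<exists>K. \<forall>a b. norm (a ** b) \<le> norm (a::real^'k^'r) * norm (b::real^'c^'k) * K"
    by (rule exI[of _ 1]) (simp add: norm_mmul_le)
qed




definition resid :: "real^'N::finite^'dx::finite \<Rightarrow> real^'N^'dy::finite \<Rightarrow> ((real^'d1::finite^'dy) \<times> (real^'dx^'d1)) \<Rightarrow> real^'N^'dy" where
  "resid Xe Y W = fst W ** snd W ** Xe - Y"

definition gradL :: "real^'N::finite^'dx::finite \<Rightarrow> real^'N^'dy::finite \<Rightarrow> ((real^'d1::finite^'dy) \<times> (real^'dx^'d1)) \<Rightarrow> ((real^'d1::finite^'dy) \<times> (real^'dx^'d1))" where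
  "gradL Xe Y W = (2 *\<^sub>R (resid Xe Y W ** transpose (snd W ** Xe)),
                   2 *\<^sub>R (transpose (fst W) ** resid Xe Y W ** transpose Xe))"

lemma Lbase_eq: "Lbase Xe Y W = inner (resid Xe Y W) (resid Xe Y W)"
  unfolding Lbase_def resid_def frob_norm by (simp add: power2_norm_eq_inner)

lemma Lbase_has_derivative:
  fixes Xe :: "real^'N::finite^'dx::finite" and Y :: "real^'N^'dy::finite" and W :: "(real^'d1::finite^'dy) \<times> (real^'dx^'d1)"
  shows "(Lbase Xe Y has_derivative (\<lambda>h. inner (gradL Xe Y W) h)) (at W within S)"
proof -
  have d: "((\<lambda>W. resid Xe Y W) has_derivative
      (\<lambda>h. fst h ** snd W ** Xe + fst W ** snd h ** Xe)) (at W within S)"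
  proof -
    have a: "((\<lambda>W. fst W ** snd W) has_derivative (\<lambda>h. fst W ** snd h + fst h ** snd W)) (at W within S)"
      by (rule bounded_bilinear.FDERIV[OF bounded_bilinear_mmul has_derivative_fst[OF has_derivative_ident] has_derivative_snd[OF has_derivative_ident]])
    have b: "((\<lambda>W. (fst W ** snd W) ** Xe) has_derivative (\<lambda>h. (fst W ** snd h + fst h ** snd W) ** Xe)) (at W within S)"
      by (rule bounded_linear.has_derivative[OF bounded_bilinear.bounded_linear_left[OF bounded_bilinear_mmul] a])
    have c: "((\<lambda>W. (fst W ** snd W) ** Xe - Y) has_derivative (\<lambda>h. (fst W ** snd h + fst h ** snd W) ** Xe - 0)) (at W within S)"
      by (rule has_derivative_diff[OF b has_derivative_const])
    show ?thesis unfolding resid_def using c by (simp add: matrix_add_rdistrib add.commute)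
  qed
  have "((\<lambda>W. inner (resid Xe Y W) (resid Xe Y W)) has_derivative
      (\<lambda>h. inner (resid Xe Y W) (fst h ** snd W ** Xe + fst W ** snd h ** Xe) +
           inner (fst h ** snd W ** Xe + fst W ** snd h ** Xe) (resid Xe Y W))) (at W within S)"
    by (rule has_derivative_inner[OF d d])
  moreover have "\<And>h. inner (resid Xe Y W) (fst h ** snd W ** Xe + fst W ** snd h ** Xe) +
           inner (fst h ** snd W ** Xe + fst W ** snd h ** Xe) (resid Xe Y W) = inner (gradL Xe Y W) h"
  proof -
    fix h :: "(real^'d1^'dy) \<times> (real^'dx^'d1)"
    obtain H2 H1 where h: "h = (H2, H1)" by (cases h)
    let ?R = "resid Xe Y W"
    have 1: "inner ?R (H2 ** snd W ** Xe) = inner (?R ** transpose (snd W ** Xe)) H2"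
      by (subst matrix_mul_assoc[symmetric]) (rule inner_mmul_right1)
    have 2: "inner ?R (fst W ** H1 ** Xe) = inner (transpose (fst W) ** ?R ** transpose Xe) H1"
      by (subst inner_mmul_right1, subst inner_mmul_right2, simp add: matrix_mul_assoc)
    show "inner ?R (fst h ** snd W ** Xe + fst W ** snd h ** Xe) +
           inner (fst h ** snd W ** Xe + fst W ** snd h ** Xe) ?R = inner (gradL Xe Y W) h"
      unfolding h gradL_def using 1 2 by (simp add: inner_add_left inner_add_right inner_commute)
  qed
  ultimately show ?thesis unfolding Lbase_eq[abs_def] by simp
qed

lemma grad_Lbase: "grad (Lbase Xe Y) W = gradL Xe Y W"
proof -
  have ex: "(Lbase Xe Y has_derivative (\<lambda>h. inner (gradL Xe Y W) h)) (at W)"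
    by (rule Lbase_has_derivative)
  have "(Lbase Xe Y has_derivative (\<lambda>h. inner (grad (Lbase Xe Y) W) h)) (at W)"
    unfolding grad_def by (rule someI_ex) (use ex in blast)
  then have "(\<lambda>h. inner (grad (Lbase Xe Y) W) h) = (\<lambda>h. inner (gradL Xe Y W) h)"
    using ex by (rule has_derivative_unique)
  then have "inner (grad (Lbase Xe Y) W - gradL Xe Y W) (grad (Lbase Xe Y) W - gradL Xe Y W) = 0"
    unfolding inner_diff_left by (drule_tac x="grad (Lbase Xe Y) W - gradL Xe Y W" in fun_cong) simp
  then show ?thesis by (simp only: inner_eq_zero_iff right_minus_eq)
qed



lemma mmul_scaleR_left: "(r *\<^sub>R (A::real^'k::finite^'r::finite)) ** (B::real^'c::finite^'k) = r *\<^sub>R (A ** B)"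
  by (simp add: matrix_matrix_mult_def vec_eq_iff sum_distrib_left mult_ac)
lemma mmul_scaleR_right: "(A::real^'k::finite^'r::finite) ** (r *\<^sub>R (B::real^'c::finite^'k)) = r *\<^sub>R (A ** B)"
  by (simp add: matrix_matrix_mult_def vec_eq_iff sum_distrib_left mult_ac)
lemma mmul_uminus_left: "(- (A::real^'k::finite^'r::finite)) ** (B::real^'c::finite^'k) = - (A ** B)"
  by (simp add: matrix_matrix_mult_def vec_eq_iff sum_negf)
lemma mmul_uminus_right: "(A::real^'k::finite^'r::finite) ** (- (B::real^'c::finite^'k)) = - (A ** B)"
  by (simp add: matrix_matrix_mult_def vec_eq_iff sum_negf)
lemma transpose_uminus: "transpose (- (A::real^'k::finite^'r::finite)) = - transpose A"
  by (simp add: transpose_def vec_eq_iff)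

lemma norm_transpose: "norm (transpose (A::real^'c::finite^'r::finite)) = norm A"
  by (simp add: norm_eq_sqrt_inner inner_transpose)

lemma bounded_linear_transpose: "bounded_linear (transpose :: real^'c::finite^'r::finite \<Rightarrow> real^'r^'c)"
  by (rule bounded_linear_intro[where K=1]) (simp_all add: transpose_add transpose_scalar norm_transpose)

lemma flow_components:
  fixes Xe :: "real^'N::finite^'dx::finite" and Y :: "real^'N^'dy::finite"
    and W2 :: "real \<Rightarrow> real^'d1::finite^'dy" and W1 :: "real \<Rightarrow> real^'dx^'d1"
  assumes flow: "is_gradient_flow (Lbase Xe Y) (\<lambda>t. (W2 t, W1 t))" and t: "t \<ge> 0"
  shows "(W2 has_derivative (\<lambda>h. h *\<^sub>R (- fst (gradL Xe Y (W2 t, W1 t))))) (at t within {0..})"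
    and "(W1 has_derivative (\<lambda>h. h *\<^sub>R (- snd (gradL Xe Y (W2 t, W1 t))))) (at t within {0..})"
proof -
  have d: "((\<lambda>t. (W2 t, W1 t)) has_derivative (\<lambda>h. h *\<^sub>R (- gradL Xe Y (W2 t, W1 t)))) (at t within {0..})"
    using flow t unfolding is_gradient_flow_def has_vector_derivative_def grad_Lbase by blast
  show "(W2 has_derivative (\<lambda>h. h *\<^sub>R (- fst (gradL Xe Y (W2 t, W1 t))))) (at t within {0..})"
    using has_derivative_fst[OF d] by simp
  show "(W1 has_derivative (\<lambda>h. h *\<^sub>R (- snd (gradL Xe Y (W2 t, W1 t))))) (at t within {0..})"
    using has_derivative_snd[OF d] by simp
qed

lemma W1P_const:
  fixes Xe :: "real^'N::finite^'dx::finite" and Y :: "real^'N^'dy::finite"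
    and W2 :: "real \<Rightarrow> real^'d1::finite^'dy" and W1 :: "real \<Rightarrow> real^'dx^'d1"
    and P :: "real^'dx^'dx"
  assumes flow: "is_gradient_flow (Lbase Xe Y) (\<lambda>t. (W2 t, W1 t))" and t: "t \<ge> 0"
    and XP: "transpose Xe ** P = 0"
  shows "W1 t ** P = W1 0 ** P"
proof -
  have "\<exists>c. \<forall>x\<in>{0::real..}. W1 x ** P = c"
  proof (rule has_derivative_zero_constant)
    fix x :: real assume x: "x \<in> {0..}"
    have "((\<lambda>t. W1 t ** P) has_derivative (\<lambda>h. (h *\<^sub>R (- snd (gradL Xe Y (W2 x, W1 x)))) ** P)) (at x within {0..})"
      by (rule bounded_linear.has_derivative[OF bounded_bilinear.bounded_linear_left[OF bounded_bilinear_mmul] flow_components(2)[OF flow]]) (use x in auto)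
    moreover have "\<And>h. (h *\<^sub>R (- snd (gradL Xe Y (W2 x, W1 x)))) ** P = 0"
      unfolding gradL_def using XP
      by (simp add: mmul_scaleR_left mmul_uminus_left flip: matrix_mul_assoc)
    ultimately show "((\<lambda>t. W1 t ** P) has_derivative (\<lambda>h. 0)) (at x within {0..})" by simp
  qed simp
  then show ?thesis using t by force
qed

lemma balanced_const:
  fixes Xe :: "real^'N::finite^'dx::finite" and Y :: "real^'N^'dy::finite"
    and W2 :: "real \<Rightarrow> real^'d1::finite^'dy" and W1 :: "real \<Rightarrow> real^'dx^'d1"
  assumes flow: "is_gradient_flow (Lbase Xe Y) (\<lambda>t. (W2 t, W1 t))" and t: "t \<ge> 0"
  shows "transpose (W2 t) ** W2 t - W1 t ** transpose (W1 t) = transpose (W2 0) ** W2 0 - W1 0 ** transpose (W1 0)"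
proof -
  have "\<exists>c. \<forall>x\<in>{0::real..}. transpose (W2 x) ** W2 x - W1 x ** transpose (W1 x) = c"
  proof (rule has_derivative_zero_constant)
    fix x :: real assume x: "x \<in> {0..}"
    define D2 where "D2 = - fst (gradL Xe Y (W2 x, W1 x))"
    define D1 where "D1 = - snd (gradL Xe Y (W2 x, W1 x))"
    have d2: "(W2 has_derivative (\<lambda>h. h *\<^sub>R D2)) (at x within {0..})"
      unfolding D2_def using flow_components(1)[OF flow] x by auto
    have d1: "(W1 has_derivative (\<lambda>h. h *\<^sub>R D1)) (at x within {0..})"
      unfolding D1_def using flow_components(2)[OF flow] x by auto
    have d2t: "((\<lambda>t. transpose (W2 t)) has_derivative (\<lambda>h. transpose (h *\<^sub>R D2))) (at x within {0..})"
      by (rule bounded_linear.has_derivative[OF bounded_linear_transpose d2])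
    have d1t: "((\<lambda>t. transpose (W1 t)) has_derivative (\<lambda>h. transpose (h *\<^sub>R D1))) (at x within {0..})"
      by (rule bounded_linear.has_derivative[OF bounded_linear_transpose d1])
    have a: "((\<lambda>t. transpose (W2 t) ** W2 t) has_derivative
        (\<lambda>h. transpose (W2 x) ** (h *\<^sub>R D2) + transpose (h *\<^sub>R D2) ** W2 x)) (at x within {0..})"
      by (rule bounded_bilinear.FDERIV[OF bounded_bilinear_mmul d2t d2])
    have b: "((\<lambda>t. W1 t ** transpose (W1 t)) has_derivative
        (\<lambda>h. W1 x ** transpose (h *\<^sub>R D1) + (h *\<^sub>R D1) ** transpose (W1 x))) (at x within {0..})"
      by (rule bounded_bilinear.FDERIV[OF bounded_bilinear_mmul d1 d1t])
    have c: "((\<lambda>t. transpose (W2 t) ** W2 t - W1 t ** transpose (W1 t)) has_derivative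
        (\<lambda>h. (transpose (W2 x) ** (h *\<^sub>R D2) + transpose (h *\<^sub>R D2) ** W2 x) -
             (W1 x ** transpose (h *\<^sub>R D1) + (h *\<^sub>R D1) ** transpose (W1 x)))) (at x within {0..})"
      by (rule has_derivative_diff[OF a b])
    have e: "transpose (W2 x) ** D2 + transpose D2 ** W2 x = W1 x ** transpose D1 + D1 ** transpose (W1 x)"
    proof -
      define A where "A = resid Xe Y (W2 x, W1 x) ** transpose Xe"
      have D2: "D2 = (- 2) *\<^sub>R (A ** transpose (W1 x))" unfolding D2_def gradL_def A_def
        by (simp add: matrix_transpose_mul matrix_mul_assoc)
      have D1: "D1 = (- 2) *\<^sub>R (transpose (W2 x) ** A)" unfolding D1_def gradL_def A_def
        by (simp add: matrix_mul_assoc)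
      show ?thesis unfolding D1 D2
        by (simp add: mmul_scaleR_left mmul_scaleR_right mmul_uminus_left mmul_uminus_right transpose_uminus transpose_scalar matrix_transpose_mul matrix_mul_assoc add.commute)
    qed
    have "\<And>h. (transpose (W2 x) ** (h *\<^sub>R D2) + transpose (h *\<^sub>R D2) ** W2 x) -
             (W1 x ** transpose (h *\<^sub>R D1) + (h *\<^sub>R D1) ** transpose (W1 x)) = 0"
      using e by (simp add: mmul_scaleR_left mmul_scaleR_right transpose_scalar flip: scaleR_right_diff_distrib scaleR_add_right)
    with c show "((\<lambda>t. transpose (W2 t) ** W2 t - W1 t ** transpose (W1 t)) has_derivative (\<lambda>h. 0)) (at x within {0..})"
      by simp
  qed simp
  then show ?thesis using t by force
qed



definition ON :: "'i set \<Rightarrow> ('i \<Rightarrow> 'a::real_inner) \<Rightarrow> bool" where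
  "ON I w \<longleftrightarrow> (\<forall>i\<in>I. \<forall>j\<in>I. inner (w i) (w j) = (if i = j then 1 else 0))"

lemma ON_inner_sum:
  assumes "ON I w" "finite I" "j \<in> I"
  shows "inner (\<Sum>i\<in>I. c i *\<^sub>R w i) (w j) = c j"
proof -
  have "inner (\<Sum>i\<in>I. c i *\<^sub>R w i) (w j) = (\<Sum>i\<in>I. c i * inner (w i) (w j))"
    by (simp add: inner_sum_left)
  also have "\<dots> = (\<Sum>i\<in>I. if i = j then c i else 0)"
    using assms(1) assms(3) unfolding ON_def by (intro sum.cong) auto
  also have "\<dots> = c j" using assms by simp
  finally show ?thesis .
qed

lemma ON_norm_sum:
  assumes "ON I w" "finite I"
  shows "(norm (\<Sum>i\<in>I. c i *\<^sub>R w i))^2 = (\<Sum>i\<in>I. (c i)^2)"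
proof -
  have "(norm (\<Sum>i\<in>I. c i *\<^sub>R w i))^2 = inner (\<Sum>i\<in>I. c i *\<^sub>R w i) (\<Sum>j\<in>I. c j *\<^sub>R w j)"
    by (simp add: power2_norm_eq_inner)
  also have "\<dots> = (\<Sum>j\<in>I. c j * inner (\<Sum>i\<in>I. c i *\<^sub>R w i) (w j))"
    by (simp add: inner_sum_right)
  also have "\<dots> = (\<Sum>j\<in>I. (c j)^2)"
    using ON_inner_sum[OF assms] by (simp add: power2_eq_square)
  finally show ?thesis .
qed

lemma ON_approx:
  assumes "ON I w" "finite I"
  shows "(norm (x - (\<Sum>i\<in>I. c i *\<^sub>R w i)))^2 =
         (norm x)^2 - (\<Sum>i\<in>I. (inner x (w i))^2) + (\<Sum>i\<in>I. (c i - inner x (w i))^2)"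
proof -
  let ?z = "\<Sum>i\<in>I. c i *\<^sub>R w i"
  have xz: "inner x ?z = (\<Sum>i\<in>I. c i * inner x (w i))"
    by (simp add: inner_sum_right)
  have "(norm (x - ?z))^2 = (norm x)^2 - 2 * inner x ?z + (norm ?z)^2"
    by (simp add: power2_norm_eq_inner inner_diff_left inner_diff_right inner_commute)
  also have "\<dots> = (norm x)^2 - 2 * (\<Sum>i\<in>I. c i * inner x (w i)) + (\<Sum>i\<in>I. (c i)^2)"
    using ON_norm_sum[OF assms] xz by simp
  also have "\<dots> = (norm x)^2 - (\<Sum>i\<in>I. (inner x (w i))^2) + (\<Sum>i\<in>I. (c i - inner x (w i))^2)"
    by (simp add: power2_diff sum.distrib sum_subtractf sum_distrib_left algebra_simps)
  finally show ?thesis .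
qed

lemma ON_proj_norm:
  assumes "ON I w" "finite I"
  shows "(norm (x - (\<Sum>i\<in>I. inner x (w i) *\<^sub>R w i)))^2 = (norm x)^2 - (\<Sum>i\<in>I. (inner x (w i))^2)"
  using ON_approx[OF assms, of x "\<lambda>i. inner x (w i)"] by simp

lemma ON_bessel:
  assumes "ON I w" "finite I"
  shows "(\<Sum>i\<in>I. (inner x (w i))^2) \<le> (norm x)^2"
  using ON_proj_norm[OF assms, of x] by (metis diff_ge_0_iff_ge zero_le_power2)

lemma ON_inj: "ON I w \<Longrightarrow> inj_on w I"
  unfolding ON_def inj_on_def by (metis one_neq_zero)

lemma ON_best:
  assumes "ON I w" "finite I" "z \<in> span (w ` I)"
  shows "(norm x)^2 - (\<Sum>i\<in>I. (inner x (w i))^2) \<le> (norm (x - z))^2"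
proof -
  have "finite (w ` I)" using assms by simp
  then obtain d where d: "z = (\<Sum>v\<in>w ` I. d v *\<^sub>R v)"
    using assms(3) span_finite by blast
  also have "\<dots> = (\<Sum>i\<in>I. d (w i) *\<^sub>R w i)"
    by (rule sum.reindex[OF ON_inj[OF assms(1)], unfolded comp_def])
  finally have z: "z = (\<Sum>i\<in>I. d (w i) *\<^sub>R w i)" .
  show ?thesis unfolding z ON_approx[OF assms(1,2)]
    by (simp add: sum_nonneg)
qed

lemma ON_parseval:
  assumes "ON I w" "finite I" "x \<in> span (w ` I)"
  shows "(\<Sum>i\<in>I. (inner x (w i))^2) = (norm x)^2"
  using ON_best[OF assms, of x] ON_bessel[OF assms(1,2), of x] by simp

lemma ON_expand:
  assumes "ON I w" "finite I" "x \<in> span (w ` I)"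
  shows "x = (\<Sum>i\<in>I. inner x (w i) *\<^sub>R w i)"
  using ON_proj_norm[OF assms(1,2), of x] ON_parseval[OF assms] by simp



lemma mv_sum: "(A::real^'n::finite^'m::finite) *v (\<Sum>i\<in>I. f i) = (\<Sum>i\<in>I. A *v f i)"
  by (induction I rule: infinite_finite_induct) (simp_all add: matrix_vector_right_distrib)

lemma ON_full_span:
  fixes v :: "nat \<Rightarrow> real^'n::finite"
  assumes "ON {..<CARD('n)} v"
  shows "span (v ` {..<CARD('n)}) = UNIV"
proof -
  let ?B = "v ` {..<CARD('n)}"
  have inj: "inj_on v {..<CARD('n)}" by (rule ON_inj[OF assms])
  have po: "pairwise orthogonal ?B"
    using assms unfolding ON_def pairwise_def orthogonal_def by auto
  have nz: "0 \<notin> ?B"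
    using assms unfolding ON_def by (auto, metis inner_zero_left lessThan_iff zero_neq_one)
  have ind: "independent ?B" by (rule pairwise_orthogonal_independent[OF po nz])
  have card: "card ?B = dim (UNIV :: (real^'n) set)"
    using card_image[OF inj] by simp
  have "UNIV \<subseteq> span ?B"
    using card_eq_dim[of ?B UNIV] card ind by simp
  then show ?thesis by auto
qed

lemma norm_sq_columns: "(norm (Y::real^'N::finite^'d::finite))^2 = (\<Sum>c\<in>UNIV. (norm (column c Y))^2)"
proof -
  have "\<And>c. (norm (column c Y))^2 = (\<Sum>k\<in>UNIV. (Y$k$c)^2)"
    unfolding power2_norm_eq_inner by (simp add: inner_vec_def column_def power2_eq_square)
  then show ?thesis unfolding norm_mat_sq by (simp only:) (rule sum.swap)
qed

lemma quad_columns: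
  "(\<Sum>c\<in>UNIV. (inner (column c (Y::real^'N::finite^'d::finite)) w)^2) = inner w ((Y ** transpose Y) *v w)"
proof -
  have "(\<Sum>c\<in>UNIV. (inner (column c Y) w)^2) = (\<Sum>c\<in>UNIV. (\<Sum>k\<in>UNIV. Y$k$c * w$k) * (\<Sum>l\<in>UNIV. Y$l$c * w$l))"
    by (simp add: inner_vec_def column_def power2_eq_square)
  also have "\<dots> = (\<Sum>c\<in>UNIV. \<Sum>k\<in>UNIV. \<Sum>l\<in>UNIV. w$k * (Y$k$c * Y$l$c * w$l))"
    by (simp add: sum_product mult_ac)
  also have "\<dots> = (\<Sum>k\<in>UNIV. \<Sum>c\<in>UNIV. \<Sum>l\<in>UNIV. w$k * (Y$k$c * Y$l$c * w$l))"
    by (rule sum.swap)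
  also have "\<dots> = (\<Sum>k\<in>UNIV. \<Sum>l\<in>UNIV. \<Sum>c\<in>UNIV. w$k * (Y$k$c * Y$l$c * w$l))"
    by (intro sum.cong refl) (rule sum.swap)
  also have "\<dots> = inner w ((Y ** transpose Y) *v w)"
    by (simp add: inner_vec_def matrix_vector_mult_def matrix_matrix_mult_def transpose_def
        sum_distrib_left sum_distrib_right mult_ac)
  finally show ?thesis .
qed

context
  fixes A :: "real^'n::finite^'n" and v :: "nat \<Rightarrow> real^'n" and \<mu> :: "nat \<Rightarrow> real"
  assumes on: "ON {..<CARD('n)} v"
    and ev: "\<And>i. i < CARD('n) \<Longrightarrow> A *v v i = \<mu> i *\<^sub>R v i"
begin

lemma eig_expand: "x = (\<Sum>i<CARD('n). inner x (v i) *\<^sub>R v i)"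
  using ON_expand[OF on, of x] ON_full_span[OF on] by simp

lemma eig_parseval: "(\<Sum>i<CARD('n). (inner x (v i))^2) = (norm x)^2"
  using ON_parseval[OF on, of x] ON_full_span[OF on] by simp

lemma eig_quad: "inner x (A *v x) = (\<Sum>i<CARD('n). \<mu> i * (inner x (v i))^2)"
proof -
  have "A *v x = (\<Sum>i<CARD('n). inner x (v i) *\<^sub>R (\<mu> i *\<^sub>R v i))"
    by (subst eig_expand) (simp add: mv_sum matrix_vector_mult_scaleR ev)
  then have "inner x (A *v x) = (\<Sum>i<CARD('n). inner x (v i) * \<mu> i * inner x (v i))"
    by (simp add: inner_sum_right mult_ac)
  then show ?thesis by (simp add: power2_eq_square mult_ac)
qed

end



lemma topsum:
  fixes \<mu> c :: "nat \<Rightarrow> real"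
  assumes pn: "p \<le> n" and c0: "\<And>j. j < n \<Longrightarrow> 0 \<le> c j" and c1: "\<And>j. j < n \<Longrightarrow> c j \<le> 1"
    and cs: "(\<Sum>j<n. c j) \<le> real p"
    and mono: "\<And>i j. i \<le> j \<Longrightarrow> j < n \<Longrightarrow> \<mu> j \<le> \<mu> i"
    and mu0: "\<And>j. j < n \<Longrightarrow> 0 \<le> \<mu> j"
  shows "(\<Sum>j<n. \<mu> j * c j) \<le> (\<Sum>j<p. \<mu> j)"
proof (cases "p = n")
  case True
  have "(\<Sum>j<n. \<mu> j * c j) \<le> (\<Sum>j<n. \<mu> j)"
    by (intro sum_mono) (use c1 mu0 in \<open>auto intro: mult_left_le\<close>)
  then show ?thesis using True by simp
next
  case False
  with pn have pn': "p < n" by simp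
  define m where "m = \<mu> p"
  have split: "\<And>f::nat\<Rightarrow>real. (\<Sum>j<n. f j) = (\<Sum>j<p. f j) + (\<Sum>j\<in>{p..<n}. f j)"
    using pn by (metis atLeast0LessThan sum.atLeastLessThan_concat zero_le)
  have "(\<Sum>j\<in>{p..<n}. \<mu> j * c j) \<le> (\<Sum>j\<in>{p..<n}. m * c j)"
    unfolding m_def by (intro sum_mono mult_right_mono) (use mono c0 in auto)
  also have "\<dots> = m * (\<Sum>j\<in>{p..<n}. c j)" by (simp add: sum_distrib_left)
  also have "\<dots> \<le> m * (real p - (\<Sum>j<p. c j))"
    using cs split[of c] mu0[OF pn'] unfolding m_def by (intro mult_left_mono) auto
  finally have 1: "(\<Sum>j\<in>{p..<n}. \<mu> j * c j) \<le> m * (real p - (\<Sum>j<p. c j))" .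
  have 2: "(\<Sum>j<p. \<mu> j * c j) + m * (real p - (\<Sum>j<p. c j)) = (\<Sum>j<p. \<mu> j * c j + m * (1 - c j))"
    by (simp add: sum.distrib sum_distrib_left sum_subtractf algebra_simps)
  have 3: "(\<Sum>j<p. \<mu> j * c j + m * (1 - c j)) \<le> (\<Sum>j<p. \<mu> j)"
  proof (intro sum_mono)
    fix j assume j: "j \<in> {..<p}"
    have "m \<le> \<mu> j" unfolding m_def using j pn' by (intro mono) auto
    moreover have "0 \<le> 1 - c j" "0 \<le> c j" using c1 c0 j pn' by auto
    ultimately have "m * (1 - c j) \<le> \<mu> j * (1 - c j)" by (intro mult_right_mono)
    then show "\<mu> j * c j + m * (1 - c j) \<le> \<mu> j" by (simp add: algebra_simps)
  qed
  show ?thesis using 1 2 3 split[of "\<lambda>j. \<mu> j * c j"] by linarith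
qed

lemma column_diff: "column c ((A::real^'n::finite^'m::finite) - B) = column c A - column c B"
  by (simp add: column_def vec_eq_iff)

lemma column_projU:
  "column c (projU p u ** (Y::real^'N::finite^'d::finite)) = (\<Sum>i<p. inner (column c Y) (u i) *\<^sub>R u i)"
proof -
  have "\<And>r. (\<Sum>k\<in>UNIV. (\<Sum>i<p. u i $ r * u i $ k) * Y $ k $ c) = (\<Sum>i<p. (\<Sum>k\<in>UNIV. Y $ k $ c * u i $ k) * u i $ r)"
    by (simp add: sum_distrib_left sum_distrib_right mult_ac sum.swap[of _ "{..<p}"])
  then show ?thesis
    by (simp add: column_def vec_eq_iff projU_def matrix_matrix_mult_def inner_vec_def sum_component)
qed

lemma rank_le_dim_span:
  fixes C :: "real^'N::finite^'d::finite"
  assumes "\<And>c. column c C \<in> span S" "finite S"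
  shows "rank C \<le> card S"
proof -
  have "columns C \<subseteq> span S" using assms(1) unfolding columns_def by auto
  then show ?thesis unfolding column_rank_def using dim_le_card assms(2) by blast
qed

lemma rank_projU: "rank (projU p u ** (Y::real^'N::finite^'d::finite)) \<le> p"
proof -
  have "rank (projU p u ** Y) \<le> card (u ` {..<p})"
    apply (rule rank_le_dim_span)
     apply (simp only: column_projU)
     apply (intro span_sum span_scale)
     apply (rule span_base)
    by auto
  also have "\<dots> \<le> p" using card_image_le[of "{..<p}" u] by simp
  finally show ?thesis .
qed



lemma EY:
  fixes Y :: "real^'N::finite^'d::finite" and C :: "real^'N^'d"
  assumes top: "top_eigvecs (Y ** transpose Y) p u" and pd: "p \<le> CARD('d)" and C: "rank C \<le> p"
  shows "norm (Y - projU p u ** Y) \<le> norm (Y - C)"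
proof -
  let ?n = "CARD('d)"
  let ?A = "Y ** transpose Y"
  obtain v \<mu> where on0: "\<forall>i<?n. \<forall>j<?n. inner (v i) (v j) = (if i = j then 1 else 0)"
    and ev: "\<forall>i<?n. ?A *v v i = \<mu> i *\<^sub>R v i"
    and mono: "\<forall>i j. i \<le> j \<longrightarrow> j < ?n \<longrightarrow> \<mu> j \<le> \<mu> i"
    and uv: "\<forall>i<p. u i = v i"
    using top unfolding top_eigvecs_def by blast
  have on: "ON {..<?n} v" using on0 unfolding ON_def by auto
  have onu: "ON {..<p} u" using on0 uv pd unfolding ON_def by auto
  have quad: "\<And>w. inner w (?A *v w) = (\<Sum>i<?n. \<mu> i * (inner w (v i))^2)"
    by (rule eig_quad[OF on]) (use ev in auto)
  have muv: "\<And>i. i < ?n \<Longrightarrow> inner (v i) (?A *v v i) = \<mu> i"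
    using ev on0 by (simp add: inner_commute)
  have mu0: "\<And>i. i < ?n \<Longrightarrow> 0 \<le> \<mu> i"
    using muv quad_columns[of Y] by (metis sum_nonneg zero_le_power2)
  have e1: "(norm (Y - projU p u ** Y))^2 = (norm Y)^2 - (\<Sum>i<p. \<mu> i)"
  proof -
    have "(norm (Y - projU p u ** Y))^2 = (\<Sum>c\<in>UNIV. (norm (column c Y))^2 - (\<Sum>i<p. (inner (column c Y) (u i))^2))"
      unfolding norm_sq_columns[of "Y - projU p u ** Y"] column_diff column_projU
      using ON_proj_norm[OF onu] by simp
    also have "\<dots> = (norm Y)^2 - (\<Sum>i<p. \<Sum>c\<in>UNIV. (inner (column c Y) (u i))^2)"
      by (simp add: sum_subtractf norm_sq_columns[of Y] sum.swap[of _ "{..<p}"])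
    also have "(\<Sum>i<p. \<Sum>c\<in>UNIV. (inner (column c Y) (u i))^2) = (\<Sum>i<p. \<mu> i)"
      using muv uv pd by (intro sum.cong refl) (simp add: quad_columns)
    finally show ?thesis .
  qed
  obtain B where BS: "B \<subseteq> span (columns C)" and Bpo: "pairwise orthogonal B"
    and Bn: "\<And>x. x \<in> B \<Longrightarrow> norm x = 1" and Bind: "independent B"
    and Bcard: "card B = dim (span (columns C))" and Bspan: "span B = span (columns C)"
    using orthonormal_basis_subspace[of "span (columns C)"] by blast
  have Bfin: "finite B" using Bind by (simp add: independent_imp_finite)
  have onB: "ON B (\<lambda>x. x)"
    unfolding ON_def using Bpo Bn
    by (auto simp: pairwise_def orthogonal_def norm_eq_sqrt_inner)
  have Bp: "card B \<le> p" using Bcard C by (simp add: column_rank_def)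
  define cc where "cc j = (\<Sum>b\<in>B. (inner b (v j))^2)" for j
  have e2: "(norm Y)^2 - (\<Sum>b\<in>B. inner b (?A *v b)) \<le> (norm (Y - C))^2"
  proof -
    have "(norm Y)^2 - (\<Sum>b\<in>B. inner b (?A *v b)) = (\<Sum>c\<in>UNIV. (norm (column c Y))^2 - (\<Sum>b\<in>B. (inner (column c Y) b)^2))"
      by (simp add: quad_columns[symmetric] sum_subtractf norm_sq_columns[of Y] sum.swap[of _ B])
    also have "\<dots> \<le> (\<Sum>c\<in>UNIV. (norm (column c Y - column c C))^2)"
    proof (intro sum_mono)
      fix c
      have "column c C \<in> span (image (\<lambda>x. x) B)"
        using Bspan by (auto simp: columns_def intro: span_base)
      then show "(norm (column c Y))^2 - (\<Sum>b\<in>B. (inner (column c Y) b)^2) \<le> (norm (column c Y - column c C))^2"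
        using ON_best[OF onB Bfin] by blast
    qed
    also have "\<dots> = (norm (Y - C))^2"
      by (simp add: norm_sq_columns[of "Y - C"] column_diff)
    finally show ?thesis .
  qed
  have e3: "(\<Sum>b\<in>B. inner b (?A *v b)) = (\<Sum>j<?n. \<mu> j * cc j)"
    unfolding quad cc_def by (simp add: sum_distrib_left sum.swap[of _ B])
  have cc1: "\<And>j. j < ?n \<Longrightarrow> cc j \<le> 1"
  proof -
    fix j assume j: "j < ?n"
    have "cc j = (\<Sum>b\<in>B. (inner (v j) b)^2)" unfolding cc_def by (simp add: inner_commute)
    also have "\<dots> \<le> (norm (v j))^2" using ON_bessel[OF onB Bfin] by simp
    also have "\<dots> = 1" using on0 j by (simp add: power2_norm_eq_inner)
    finally show "cc j \<le> 1" .
  qed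
  have cc0: "\<And>j. 0 \<le> cc j" unfolding cc_def by (simp add: sum_nonneg)
  have ccs: "(\<Sum>j<?n. cc j) \<le> real p"
  proof -
    have "(\<Sum>j<?n. cc j) = (\<Sum>b\<in>B. \<Sum>j<?n. (inner b (v j))^2)"
      unfolding cc_def by (rule sum.swap)
    also have "\<dots> = (\<Sum>b\<in>B. (norm b)^2)"
      by (intro sum.cong refl eig_parseval[OF on]) (use ev in auto)
    also have "\<dots> = real (card B)" using Bn by simp
    finally show ?thesis using Bp by simp
  qed
  have key: "(\<Sum>j<?n. \<mu> j * cc j) \<le> (\<Sum>j<p. \<mu> j)"
    by (rule topsum[OF pd]) (use cc0 cc1 ccs mono mu0 in auto)
  have "(norm (Y - projU p u ** Y))^2 \<le> (norm (Y - C))^2"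
    using e1 e2 e3 key by linarith
  then show ?thesis by (simp add: power2_le_iff_abs_le)
qed



lemma matrix_inv_props:
  assumes "invertible (A::real^'n::finite^'m::finite)"
  shows "A ** matrix_inv A = mat 1" "matrix_inv A ** A = mat 1"
proof -
  have "A ** matrix_inv A = mat 1 \<and> matrix_inv A ** A = mat 1"
    using assms unfolding invertible_def matrix_inv_def by (rule someI_ex)
  then show "A ** matrix_inv A = mat 1" "matrix_inv A ** A = mat 1" by auto
qed

lemma factor_projU:
  fixes u :: "nat \<Rightarrow> real^'dy::finite" and Q :: "real^'dx::finite^'dy"
  assumes "p \<le> CARD('d1::finite)"
  shows "\<exists>(W2::real^'d1^'dy) (W1::real^'dx^'d1). W2 ** W1 = projU p u ** Q"
proof -
  obtain h :: "nat \<Rightarrow> 'd1" where h: "bij_betw h {0..<CARD('d1)} UNIV"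
    using ex_bij_betw_nat_finite[of "UNIV::'d1 set"] by auto
  have inj: "inj_on h {..<p}"
    using bij_betw_imp_inj_on[OF h] assms by (auto intro: inj_on_subset)
  define m where "m i = u i v* Q" for i
  define W2 :: "real^'d1^'dy" where "W2 = (\<chi> r k. \<Sum>i<p. if h i = k then u i $ r else 0)"
  define W1 :: "real^'dx^'d1" where "W1 = (\<chi> k c. \<Sum>i<p. if h i = k then m i $ c else 0)"
  have "W2 ** W1 = projU p u ** Q"
  proof (simp add: vec_eq_iff, intro allI)
    fix r c
    have "(W2 ** W1) $ r $ c = (\<Sum>k\<in>UNIV. (\<Sum>i<p. if h i = k then u i $ r else 0) * (\<Sum>i'<p. if h i' = k then m i' $ c else 0))"
      by (simp add: W2_def W1_def matrix_matrix_mult_def)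
    also have "\<dots> = (\<Sum>k\<in>UNIV. \<Sum>i<p. if h i = k then u i $ r * (\<Sum>i'<p. if h i' = k then m i' $ c else 0) else 0)"
      by (simp add: sum_distrib_right) (intro sum.cong refl, auto)
    also have "\<dots> = (\<Sum>i<p. \<Sum>k\<in>UNIV. if h i = k then u i $ r * (\<Sum>i'<p. if h i' = k then m i' $ c else 0) else 0)"
      by (rule sum.swap)
    also have "\<dots> = (\<Sum>i<p. u i $ r * (\<Sum>i'<p. if h i' = h i then m i' $ c else 0))"
      by simp
    also have "\<dots> = (\<Sum>i<p. u i $ r * m i $ c)"
    proof (intro sum.cong refl)
      fix i assume i: "i \<in> {..<p}"
      have "(\<Sum>i'<p. if h i' = h i then m i' $ c else 0) = (\<Sum>i'<p. if i' = i then m i' $ c else 0)"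
        using inj i by (intro sum.cong refl) (auto dest: inj_onD)
      then show "u i $ r * (\<Sum>i'<p. if h i' = h i then m i' $ c else 0) = u i $ r * m i $ c"
        using i by simp
    qed
    also have "\<dots> = (projU p u ** Q) $ r $ c"
      by (simp add: projU_def matrix_matrix_mult_def m_def vector_matrix_mult_def
          sum_distrib_left sum_distrib_right mult_ac sum.swap[of _ "{..<p}"])
    finally show "(W2 ** W1) $ r $ c = (projU p u ** Q) $ r $ c" .
  qed
  then show ?thesis by blast
qed

lemma rank_prod_le_p:
  fixes A2 :: "real^'d1::finite^'dy::finite" and A1 :: "real^'dx::finite^'d1" and Xe :: "real^'N::finite^'dx"
  shows "rank (A2 ** A1 ** Xe) \<le> pdim TYPE('dx) TYPE('d1) TYPE('dy)"
proof -
  have 1: "rank (A2 ** A1 ** Xe) \<le> rank (A2 ** A1)" by (rule rank_mul_le_left)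
  have 2: "rank (A2 ** A1) \<le> rank A2" by (rule rank_mul_le_left)
  have 3: "rank (A2 ** A1) \<le> rank A1" by (rule rank_mul_le_right)
  have 4: "rank A2 \<le> min CARD('dy) CARD('d1)" by (rule rank_bound)
  have 5: "rank A1 \<le> min CARD('d1) CARD('dx)" by (rule rank_bound)
  show ?thesis unfolding pdim_def using 1 2 3 4 5 by linarith
qed

lemma minimizer:
  fixes Xe :: "real^'N::finite^'dx::finite" and Y :: "real^'N^'dy::finite"
    and A2 :: "real^'d1::finite^'dy" and A1 :: "real^'dx^'d1"
  assumes inv: "invertible (transpose Xe ** Xe)"
    and uniq: "unique_best_rank_approx p Y"
    and pdef: "p = pdim TYPE('dx) TYPE('d1) TYPE('dy)"
    and top: "top_eigvecs (Y ** transpose Y) p u"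
    and min: "\<forall>B :: (real^'d1^'dy) \<times> (real^'dx^'d1). Lbase Xe Y (A2, A1) \<le> Lbase Xe Y B"
  shows "A2 ** A1 ** Xe = projU p u ** Y"
proof -
  let ?B0 = "projU p u ** Y"
  have pd1: "p \<le> CARD('d1)" and pdy: "p \<le> CARD('dy)" using pdef by (auto simp: pdim_def)
  obtain W2 :: "real^'d1^'dy" and W1 :: "real^'dx^'d1"
    where W: "W2 ** W1 = projU p u ** (Y ** matrix_inv (transpose Xe ** Xe) ** transpose Xe)"
    using factor_projU[OF pd1] by blast
  have "W2 ** W1 ** Xe = ?B0 ** (matrix_inv (transpose Xe ** Xe) ** (transpose Xe ** Xe))"
    unfolding W by (simp add: matrix_mul_assoc)
  then have WB: "W2 ** W1 ** Xe = ?B0" by (simp add: matrix_inv_props(2)[OF inv])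
  have "Lbase Xe Y (A2, A1) \<le> Lbase Xe Y (W2, W1)" using min by blast
  then have "(norm (A2 ** A1 ** Xe - Y))^2 \<le> (norm (?B0 - Y))^2"
    unfolding Lbase_def frob_norm using WB by simp
  then have le: "norm (Y - A2 ** A1 ** Xe) \<le> norm (Y - ?B0)"
    by (simp add: power2_le_iff_abs_le norm_minus_commute)
  have P0: "rank ?B0 \<le> p \<and> (\<forall>C. rank C \<le> p \<longrightarrow> frob (Y - ?B0) \<le> frob (Y - C))"
    using rank_projU EY[OF top pdy] by (simp add: frob_norm)
  have P1: "rank (A2 ** A1 ** Xe) \<le> p \<and> (\<forall>C. rank C \<le> p \<longrightarrow> frob (Y - A2 ** A1 ** Xe) \<le> frob (Y - C))"
    using rank_prod_le_p[of A2 A1 Xe] pdef le EY[OF top pdy] by (auto simp: frob_norm intro: order_trans)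
  show ?thesis using uniq P0 P1 unfolding unique_best_rank_approx_def by blast
qed



lemma trace_bound:
  fixes S :: "real^'n::finite^'n"
  shows "(\<Sum>c\<in>UNIV. S$c$c)^2 \<le> real (rank S) * (norm S)^2"
proof -
  obtain B where BS: "B \<subseteq> span (columns S)" and Bpo: "pairwise orthogonal B"
    and Bn: "\<And>x. x \<in> B \<Longrightarrow> norm x = 1" and Bind: "independent B"
    and Bcard: "card B = dim (span (columns S))" and Bspan: "span B = span (columns S)"
    using orthonormal_basis_subspace[of "span (columns S)"] by blast
  have Bfin: "finite B" using Bind by (simp add: independent_imp_finite)
  have onB: "ON B (\<lambda>x. x)"
    unfolding ON_def using Bpo Bn
    by (auto simp: pairwise_def orthogonal_def norm_eq_sqrt_inner)
  have Br: "card B = rank S" using Bcard by (simp add: column_rank_def)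
  have colB: "\<And>c. column c S \<in> span ((\<lambda>x. x) ` B)"
    using Bspan by (auto simp: columns_def intro: span_base)
  define f where "f b = (\<Sum>c\<in>UNIV. inner (column c S) b * b$c)" for b
  have "(\<Sum>c\<in>UNIV. S$c$c) = (\<Sum>c\<in>UNIV. (column c S)$c)" by (simp add: column_def)
  also have "\<dots> = (\<Sum>c\<in>UNIV. (\<Sum>b\<in>B. inner (column c S) b *\<^sub>R b)$c)"
    using ON_expand[OF onB Bfin colB] by (intro sum.cong refl) metis
  also have "\<dots> = (\<Sum>b\<in>B. f b)"
    unfolding f_def by (simp add: sum_component) (rule sum.swap)
  finally have tr: "(\<Sum>c\<in>UNIV. S$c$c) = (\<Sum>b\<in>B. f b)" .
  have fb: "\<And>b. b \<in> B \<Longrightarrow> (f b)^2 \<le> (\<Sum>c\<in>UNIV. (inner (column c S) b)^2)"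
  proof -
    fix b assume b: "b \<in> B"
    have "(f b)^2 \<le> (\<Sum>c\<in>UNIV. (inner (column c S) b)^2) * (\<Sum>c\<in>UNIV. (b$c)^2)"
      unfolding f_def by (rule Cauchy_Schwarz_ineq_sum)
    also have "(\<Sum>c\<in>UNIV. (b$c)^2) = 1"
      using Bn[OF b] by (simp add: norm_vec_def L2_set_def)
    finally show "(f b)^2 \<le> (\<Sum>c\<in>UNIV. (inner (column c S) b)^2)" by simp
  qed
  have s1: "(\<Sum>b\<in>B. f b)^2 \<le> (\<Sum>b\<in>B. (f b)^2) * real (card B)"
    by (rule sum_squared_le_sum_of_squares)
  have s2: "(\<Sum>b\<in>B. (f b)^2) \<le> (\<Sum>b\<in>B. \<Sum>c\<in>UNIV. (inner (column c S) b)^2)"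
    by (intro sum_mono fb)
  have s3: "(\<Sum>b\<in>B. \<Sum>c\<in>UNIV. (inner (column c S) b)^2) = (\<Sum>c\<in>UNIV. \<Sum>b\<in>B. (inner (column c S) b)^2)"
    by (rule sum.swap)
  have s4: "(\<Sum>c\<in>UNIV. \<Sum>b\<in>B. (inner (column c S) b)^2) \<le> (\<Sum>c\<in>UNIV. (norm (column c S))^2)"
    by (intro sum_mono ON_bessel[OF onB Bfin])
  have s5: "(\<Sum>c\<in>UNIV. (norm (column c S))^2) = (norm S)^2" by (simp add: norm_sq_columns)
  have "(\<Sum>b\<in>B. (f b)^2) \<le> (norm S)^2" using s2 s3 s4 s5 by linarith
  then have "(\<Sum>b\<in>B. (f b)^2) * real (card B) \<le> (norm S)^2 * real (card B)"
    by (rule mult_right_mono) simp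
  with s1 show ?thesis using tr Br by (simp add: mult.commute)
qed

lemma balanced_bound:
  fixes A2 :: "real^'d1::finite^'dy::finite" and A1 :: "real^'dx::finite^'d1"
  assumes bal: "transpose A2 ** A2 = A1 ** transpose A1"
  shows "(norm A2)^2 \<le> sqrt (real (pdim TYPE('dx) TYPE('d1) TYPE('dy))) * norm (A2 ** A1)"
proof -
  define S where "S = transpose A2 ** A2"
  have tr: "(norm A2)^2 = (\<Sum>c\<in>UNIV. S$c$c)"
    unfolding S_def norm_mat_sq
    by (simp add: matrix_matrix_mult_def transpose_def power2_eq_square) (rule sum.swap)
  have "inner (A2 ** A1) (A2 ** A1) = inner (A2 ** A1 ** transpose A1) A2"
    by (rule inner_mmul_right1)
  also have "\<dots> = inner A2 (A2 ** S)"
    by (simp add: S_def bal inner_commute matrix_mul_assoc)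
  also have "\<dots> = inner S S" by (simp add: inner_mmul_right2 S_def)
  finally have nS: "norm (A2 ** A1) = norm S" by (simp add: norm_eq_sqrt_inner)
  have rS: "rank S \<le> pdim TYPE('dx) TYPE('d1) TYPE('dy)"
  proof -
    have 1: "rank S \<le> rank A2" unfolding S_def by (rule rank_mul_le_right)
    have 2: "rank S \<le> rank A1" unfolding S_def bal by (rule rank_mul_le_left)
    have 3: "rank A2 \<le> min CARD('dy) CARD('d1)" by (rule rank_bound)
    have 4: "rank A1 \<le> min CARD('d1) CARD('dx)" by (rule rank_bound)
    show ?thesis unfolding pdim_def using 1 2 3 4 by linarith
  qed
  have "((norm A2)^2)^2 \<le> real (rank S) * (norm S)^2" using trace_bound[of S] tr by simp
  also have "\<dots> \<le> real (pdim TYPE('dx) TYPE('d1) TYPE('dy)) * (norm S)^2"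
    using rS by (intro mult_right_mono) auto
  also have "\<dots> = (sqrt (real (pdim TYPE('dx) TYPE('d1) TYPE('dy))) * norm S)^2"
    by (simp add: power_mult_distrib)
  finally show ?thesis unfolding nS
    by (rule power2_le_imp_le) simp
qed



lemma quad_bound:
  fixes a s \<delta> \<gamma> :: real
  assumes "0 \<le> a" "0 \<le> s" "0 \<le> \<delta>" "0 \<le> \<gamma>" "a^2 \<le> s * (\<gamma> + \<delta> * a)"
  shows "a \<le> s * \<delta> + sqrt (s * \<gamma>)"
proof (rule ccontr)
  define r where "r = sqrt (s * \<gamma>)"
  have r0: "0 \<le> r" and r2: "r * r = s * \<gamma>" using assms by (auto simp: r_def)
  assume "\<not> a \<le> s * \<delta> + sqrt (s * \<gamma>)"
  then have a: "s * \<delta> + r < a" by (simp add: r_def)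
  have "0 \<le> s * \<delta>" using assms by simp
  then have "r < a" "r < a - s * \<delta>" "0 < a" using a r0 by auto
  then have "r * r < a * (a - s * \<delta>)" using r0 by (intro mult_strict_mono) auto
  then show False using assms(5) r2 by (simp add: power2_eq_square algebra_simps)
qed

lemma matrix_inv_transpose_sym:
  fixes G :: "real^'n::finite^'n"
  assumes "invertible G" "transpose G = G"
  shows "transpose (matrix_inv G) = matrix_inv G"
proof -
  have 1: "G ** matrix_inv G = mat 1" "matrix_inv G ** G = mat 1" using matrix_inv_props[OF assms(1)] by auto
  have "transpose (matrix_inv G) ** G = mat 1"
    using arg_cong[OF 1(1), of transpose] assms(2) by (simp add: matrix_transpose_mul)
  then have "transpose (matrix_inv G) = transpose (matrix_inv G) ** (G ** matrix_inv G)" by (simp add: 1)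
  also have "\<dots> = matrix_inv G" by (simp add: matrix_mul_assoc \<open>transpose (matrix_inv G) ** G = mat 1\<close>)
  finally show ?thesis .
qed

lemma proj_norm_le:
  fixes M :: "real^'n::finite^'m::finite" and P :: "real^'n^'n"
  assumes sym: "transpose P = P" and idem: "P ** P = P"
  shows "norm (M ** (mat 1 - P)) \<le> norm M"
proof -
  have "inner (M ** P) (M ** (mat 1 - P)) = inner (M ** P ** transpose (mat 1 - P)) M"
    by (rule inner_mmul_right1)
  also have "M ** P ** transpose (mat 1 - P) = 0"
    using sym idem by (simp add: transpose_diff matrix_diff_ldistrib flip: matrix_mul_assoc)
  finally have o: "inner (M ** P) (M ** (mat 1 - P)) = 0" by simp
  have M: "M = M ** P + M ** (mat 1 - P)" by (simp add: matrix_diff_ldistrib)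
  have "(norm M)^2 = (norm (M ** P))^2 + (norm (M ** (mat 1 - P)))^2"
    apply (subst M) using o by (simp add: power2_norm_eq_inner inner_add_left inner_add_right inner_commute)
  then have "(norm (M ** (mat 1 - P)))^2 \<le> (norm M)^2" by simp
  then show ?thesis by (rule power2_le_imp_le) simp
qed

lemma det_core:
  fixes Xe :: "real^'N::finite^'dx::finite" and Y :: "real^'N^'dy::finite"
    and W2 :: "real \<Rightarrow> real^'d1::finite^'dy" and W1 :: "real \<Rightarrow> real^'dx^'d1"
    and A2 :: "real^'d1^'dy" and A1 :: "real^'dx^'d1"
  assumes inv: "invertible (transpose Xe ** Xe)"
    and uniq: "unique_best_rank_approx p Y"
    and pdef: "p = pdim TYPE('dx) TYPE('d1) TYPE('dy)"
    and top: "top_eigvecs (Y ** transpose Y) p u"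
    and dpos: "\<delta> > 0"
    and flow: "is_gradient_flow (Lbase Xe Y) (\<lambda>t. (W2 t, W1 t))"
    and bal0: "transpose (W2 0) ** W2 0 = W1 0 ** transpose (W1 0)"
    and f1: "frob (W1 0) \<le> \<delta>"
    and lim: "((\<lambda>t. (W2 t, W1 t)) \<longlongrightarrow> (A2, A1)) at_top"
    and min: "\<forall>B :: (real^'d1^'dy) \<times> (real^'dx^'d1). Lbase Xe Y (A2, A1) \<le> Lbase Xe Y B"
  shows "\<exists>Wd. ((\<lambda>t. W2 t ** W1 t) \<longlongrightarrow> (projU p u ** Y ** matrix_inv (transpose Xe ** Xe) ** transpose Xe) + Wd) at_top \<and>
              frob Wd \<le> (sqrt (real p) * \<delta> + real p powr (1/4) * sqrt (frob (projU p u ** Y ** matrix_inv (transpose Xe ** Xe) ** transpose Xe))) * \<delta>"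
proof -
  define G where "G = transpose Xe ** Xe"
  define Gi where "Gi = matrix_inv G"
  define Wstar where "Wstar = projU p u ** Y ** Gi ** transpose Xe"
  define \<gamma> where "\<gamma> = norm Wstar"
  define P where "P = Xe ** Gi ** transpose Xe"
  define Pp where "Pp = (mat 1 :: real^'dx^'dx) - P"
  have invG: "invertible G" using inv by (simp add: G_def)
  have GGi: "G ** Gi = mat 1" "Gi ** G = mat 1" using matrix_inv_props[OF invG] by (auto simp: Gi_def)
  have Gsym: "transpose G = G" by (simp add: G_def matrix_transpose_mul)
  have Gisym: "transpose Gi = Gi" unfolding Gi_def by (rule matrix_inv_transpose_sym[OF invG Gsym])
  have Psym: "transpose P = P" by (simp add: P_def matrix_transpose_mul Gisym matrix_mul_assoc)
  have Pidem: "P ** P = P"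
  proof -
    have "P ** P = Xe ** Gi ** (G ** Gi) ** transpose Xe" by (simp add: P_def G_def matrix_mul_assoc)
    then show ?thesis by (simp add: GGi P_def)
  qed
  have XPp: "transpose Xe ** Pp = 0"
  proof -
    have "transpose Xe ** P = (G ** Gi) ** transpose Xe" by (simp add: P_def G_def matrix_mul_assoc)
    then show ?thesis by (simp add: Pp_def matrix_diff_ldistrib GGi)
  qed
  have l2: "(W2 \<longlongrightarrow> A2) at_top" using tendsto_fst[OF lim] by simp
  have l1: "(W1 \<longlongrightarrow> A1) at_top" using tendsto_snd[OF lim] by simp
  have lprod: "((\<lambda>t. W2 t ** W1 t) \<longlongrightarrow> A2 ** A1) at_top"
    by (rule bounded_bilinear.tendsto[OF bounded_bilinear_mmul l2 l1])
  have ev: "eventually (\<lambda>t. t \<ge> 0) (at_top :: real filter)" by (rule eventually_ge_at_top)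
  \<comment> \<open>the part of W1 orthogonal to the data is frozen\<close>
  have A1Pp: "A1 ** Pp = W1 0 ** Pp"
  proof -
    have a: "((\<lambda>t. W1 t ** Pp) \<longlongrightarrow> A1 ** Pp) at_top"
      by (rule bounded_bilinear.tendsto[OF bounded_bilinear_mmul l1 tendsto_const])
    have "eventually (\<lambda>t. W1 t ** Pp = W1 0 ** Pp) at_top"
      using ev by (rule eventually_mono) (rule W1P_const[OF flow _ XPp])
    then have b: "((\<lambda>t. W1 t ** Pp) \<longlongrightarrow> W1 0 ** Pp) at_top"
      by (rule tendsto_eventually)
    show ?thesis by (rule tendsto_unique[OF _ a b]) simp
  qed
  have bal: "transpose A2 ** A2 = A1 ** transpose A1"
  proof -
    have a: "((\<lambda>t. transpose (W2 t) ** W2 t - W1 t ** transpose (W1 t)) \<longlongrightarrow> transpose A2 ** A2 - A1 ** transpose A1) at_top"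
      by (intro tendsto_diff bounded_bilinear.tendsto[OF bounded_bilinear_mmul]
          bounded_linear.tendsto[OF bounded_linear_transpose] l1 l2)
    have "eventually (\<lambda>t. transpose (W2 t) ** W2 t - W1 t ** transpose (W1 t) = 0) at_top"
      using ev by (rule eventually_mono) (simp add: balanced_const[OF flow] bal0)
    then have b: "((\<lambda>t. transpose (W2 t) ** W2 t - W1 t ** transpose (W1 t)) \<longlongrightarrow> 0) at_top"
      by (rule tendsto_eventually)
    have "transpose A2 ** A2 - A1 ** transpose A1 = 0" by (rule tendsto_unique[OF _ a b]) simp
    then show ?thesis by simp
  qed
  have AX: "A2 ** A1 ** Xe = projU p u ** Y"
    by (rule minimizer[OF inv uniq pdef top min])
  define Wd where "Wd = A2 ** A1 - Wstar"
  have Wd: "Wd = A2 ** (W1 0 ** Pp)"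
  proof -
    have "A2 ** A1 ** P = (A2 ** A1 ** Xe) ** Gi ** transpose Xe" by (simp add: P_def matrix_mul_assoc)
    then have "A2 ** A1 ** P = Wstar" by (simp add: AX Wstar_def)
    then have "A2 ** A1 = Wstar + A2 ** A1 ** Pp" by (simp add: Pp_def matrix_diff_ldistrib)
    moreover have "A2 ** A1 ** Pp = A2 ** (W1 0 ** Pp)" by (simp add: A1Pp flip: matrix_mul_assoc)
    ultimately show ?thesis by (simp add: Wd_def)
  qed
  define a where "a = norm A2"
  have pge1: "1 \<le> p" using pdef by (simp add: pdim_def Suc_le_eq)
  have nWd: "norm Wd \<le> a * \<delta>"
  proof -
    have "norm Wd \<le> norm A2 * norm (W1 0 ** Pp)" unfolding Wd by (rule norm_mmul_le)
    also have "norm (W1 0 ** Pp) \<le> norm (W1 0)" unfolding Pp_def by (rule proj_norm_le[OF Psym Pidem])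
    also have "\<dots> \<le> \<delta>" using f1 by (simp add: frob_norm)
    finally show ?thesis unfolding a_def by (simp add: mult_left_mono)
  qed
  have nprod: "norm (A2 ** A1) \<le> \<gamma> + \<delta> * a"
  proof -
    have "A2 ** A1 = Wstar + Wd" by (simp add: Wd_def)
    then have "norm (A2 ** A1) \<le> norm Wstar + norm Wd" by (simp add: norm_triangle_ineq)
    then show ?thesis using nWd unfolding \<gamma>_def by (simp add: mult.commute)
  qed
  have "a^2 \<le> sqrt (real p) * norm (A2 ** A1)" unfolding a_def pdef by (rule balanced_bound[OF bal])
  also have "\<dots> \<le> sqrt (real p) * (\<gamma> + \<delta> * a)" by (intro mult_left_mono nprod) simp
  finally have q: "a^2 \<le> sqrt (real p) * (\<gamma> + \<delta> * a)" .
  have abound: "a \<le> sqrt (real p) * \<delta> + sqrt (sqrt (real p) * \<gamma>)"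
    by (rule quad_bound[OF _ _ _ _ q]) (use dpos in \<open>auto simp: a_def \<gamma>_def\<close>)
  have p4: "real p powr (1/4) = sqrt (sqrt (real p))"
  proof -
    have "real p powr (1/4) = (real p powr (1/2)) powr (1/2)" by (simp add: powr_powr)
    then show ?thesis by (simp add: powr_half_sqrt)
  qed
  have "sqrt (sqrt (real p) * \<gamma>) = real p powr (1/4) * sqrt \<gamma>" by (simp add: p4 real_sqrt_mult)
  then have abound': "a \<le> sqrt (real p) * \<delta> + real p powr (1/4) * sqrt \<gamma>" using abound by simp
  have "norm Wd \<le> (sqrt (real p) * \<delta> + real p powr (1/4) * sqrt \<gamma>) * \<delta>"
    using nWd abound' dpos by (meson less_imp_le mult_right_mono order_trans)
  moreover have "((\<lambda>t. W2 t ** W1 t) \<longlongrightarrow> Wstar + Wd) at_top" using lprod by (simp add: Wd_def)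
  ultimately show ?thesis unfolding Wstar_def Gi_def G_def \<gamma>_def frob_norm by blast
qed



lemma norm_mv_le: "norm ((A::real^'n::finite^'m::finite) *v x) \<le> norm A * norm x"
proof -
  have "(norm (A *v x))^2 = (\<Sum>r\<in>UNIV. (inner (A$r) x)^2)"
    unfolding power2_norm_eq_inner by (simp add: inner_vec_def matrix_vector_mult_def power2_eq_square)
  also have "\<dots> \<le> (\<Sum>r\<in>UNIV. (norm (A$r))^2 * (norm x)^2)"
  proof (intro sum_mono)
    fix r
    have "\<bar>inner (A$r) x\<bar> \<le> norm (A$r) * norm x" by (rule Cauchy_Schwarz_ineq2)
    then have "(inner (A$r) x)^2 \<le> (norm (A$r) * norm x)^2"
      by (metis abs_ge_zero power2_abs power_mono)
    then show "(inner (A$r) x)^2 \<le> (norm (A$r))^2 * (norm x)^2" by (simp add: power_mult_distrib)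
  qed
  also have "\<dots> = (norm A * norm x)^2"
    by (simp add: sum_distrib_right[symmetric] power_mult_distrib norm_vec_def L2_set_def sum_nonneg)
  finally show ?thesis by (rule power2_le_imp_le) simp
qed

lemma bounded_bilinear_mv:
  "bounded_bilinear ((*v) :: real^'n::finite^'m::finite \<Rightarrow> real^'n \<Rightarrow> real^'m)"
proof
  fix a a' :: "real^'n^'m" and b b' :: "real^'n" and r :: real
  show "(a + a') *v b = a *v b + a' *v b" by (simp add: matrix_vector_mult_add_rdistrib)
  show "a *v (b + b') = a *v b + a *v b'" by (simp add: matrix_vector_right_distrib)
  show "(r *\<^sub>R a) *v b = r *\<^sub>R (a *v b)"
    by (simp add: matrix_vector_mult_def vec_eq_iff sum_distrib_left mult_ac)
  show "a *v (r *\<^sub>R b) = r *\<^sub>R (a *v b)"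
    by (simp add: matrix_vector_mult_def vec_eq_iff sum_distrib_left mult_ac)
next
  show "\<exists>K. \<forall>a b. norm (a *v b) \<le> norm (a::real^'n^'m) * norm (b::real^'n) * K"
    by (rule exI[of _ 1]) (simp add: norm_mv_le)
qed

definition Rng :: "((real^'dx::finite) \<times> (real^'N::finite^'dx)) set" where
  "Rng = {(w, Z). \<exists>a. Z *v a = w}"

lemma Rng_borel: "Rng \<in> sets (borel :: ((real^'dx::finite) \<times> (real^'N::finite^'dx)) measure)"
proof -
  let ?f = "\<lambda>p::(real^'N) \<times> (real^'N^'dx). (snd p *v fst p, snd p)"
  have cont: "continuous_on UNIV ?f"
    by (intro continuous_intros bounded_bilinear.continuous_on[OF bounded_bilinear_mv])
  have "Rng = (\<Union>n::nat. ?f ` cball 0 (real n))"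
  proof
    show "Rng \<subseteq> (\<Union>n::nat. ?f ` cball 0 (real n))"
    proof
      fix q assume "q \<in> (Rng :: ((real^'dx) \<times> (real^'N^'dx)) set)"
      then obtain w Z a where q: "q = (w, Z)" "Z *v a = w" unfolding Rng_def by auto
      obtain n :: nat where "norm (a, Z) \<le> real n" using real_arch_simple by blast
      then have "(a, Z) \<in> cball 0 (real n)" by (simp only: mem_cball_0)
      then show "q \<in> (\<Union>n::nat. ?f ` cball 0 (real n))" using q by (auto intro!: image_eqI[of _ _ "(a, Z)"])
    qed
    show "(\<Union>n::nat. ?f ` cball 0 (real n)) \<subseteq> Rng" unfolding Rng_def by auto
  qed
  moreover have "\<And>n::nat. ?f ` cball 0 (real n) \<in> sets borel"
  proof -
    fix n :: nat
    have "compact (?f ` cball 0 (real n))"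
      by (rule compact_continuous_image[OF continuous_on_subset[OF cont] compact_cball]) simp
    then show "?f ` cball 0 (real n) \<in> sets borel" by (intro borel_closed compact_imp_closed)
  qed
  ultimately show ?thesis using sets.countable_UN[of "\<lambda>n::nat. ?f ` cball 0 (real n)" UNIV borel] by auto
qed

lemma Rng_section_negligible:
  fixes Z :: "real^'N::finite^'dx::finite" and e :: "real^'dx"
  assumes "CARD('N) < CARD('dx)"
  shows "negligible {a. (a + e, Z) \<in> Rng}"
proof -
  have "dim (range ((*v) Z)) < DIM(real^'dx)"
    using rank_bound[of Z] assms by (simp add: rank_dim_range[symmetric])
  then have n: "negligible (range ((*v) Z))" by (rule negligible_lowdim)
  have "{a. (a + e, Z) \<in> Rng} = (\<lambda>v. (- e) + v) ` range ((*v) Z)"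
    unfolding Rng_def by (auto simp: image_iff algebra_simps) (metis add.commute diff_add_cancel)
  then show ?thesis using negligible_translation[OF n, of "- e"] by simp
qed



definition emb :: "'N \<Rightarrow> real^'dx \<Rightarrow> real^'N^'dx" where
  "emb c w = (\<chi> r j. if j = c then w $ r else 0)"

definition ZS :: "'N::finite set \<Rightarrow> ('N \<Rightarrow> real^'dx::finite) \<Rightarrow> real^'N^'dx" where
  "ZS S v = (\<Sum>c\<in>S. emb c (v c))"

lemma ZS_mult: "ZS S v *v a = (\<Sum>j\<in>S. a$j *\<^sub>R v j)"
proof -
  have "\<And>i. (\<Sum>j\<in>UNIV. a $ j * (if j \<in> S then v j $ i else 0)) = (\<Sum>j\<in>UNIV. if j \<in> S then a $ j * v j $ i else 0)"
    by (intro sum.cong) auto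
  also have "\<And>i. (\<Sum>j\<in>UNIV. if j \<in> S then a $ j * v j $ i else 0) = (\<Sum>j\<in>S. a $ j * v j $ i)"
    by (simp add: sum.inter_restrict[symmetric])
  finally have *: "\<And>i. (\<Sum>j\<in>UNIV. a $ j * (if j \<in> S then v j $ i else 0)) = (\<Sum>j\<in>S. a $ j * v j $ i)" .
  show ?thesis
    by (simp add: ZS_def emb_def vec_eq_iff matrix_vector_mult_def sum_component
      if_distrib[where f="\<lambda>z. z * _"] sum.swap[of _ S] mult.commute * cong: if_cong)
qed

lemma emb_cont: "continuous_on UNIV (emb c :: real^'dx::finite \<Rightarrow> real^'N::finite^'dx)"
proof -
  have "bounded_linear (emb c :: real^'dx \<Rightarrow> real^'N^'dx)"
  proof (rule bounded_linear_intro[where K=1])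
    fix w w' :: "real^'dx" and r :: real
    show "emb c (w + w') = (emb c w :: real^'N^'dx) + emb c w'" by (simp add: emb_def vec_eq_iff)
    show "emb c (r *\<^sub>R w) = r *\<^sub>R (emb c w :: real^'N^'dx)" by (simp add: emb_def vec_eq_iff)
    have e: "\<And>r. (\<Sum>ca\<in>UNIV. ((emb c w :: real^'N^'dx) $ r $ ca)^2) = (w $ r)^2"
    proof -
      fix r
      have "(\<Sum>ca\<in>UNIV. ((emb c w :: real^'N^'dx) $ r $ ca)^2) = (\<Sum>ca\<in>UNIV. if ca = c then (w $ r)^2 else 0)"
        by (intro sum.cong) (auto simp: emb_def)
      then show "(\<Sum>ca\<in>UNIV. ((emb c w :: real^'N^'dx) $ r $ ca)^2) = (w $ r)^2" by simp
    qed
    have "(norm (emb c w :: real^'N^'dx))^2 = (norm w)^2"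
      unfolding norm_mat_sq e by (simp add: norm_vec_def L2_set_def sum_nonneg)
    then show "norm (emb c w :: real^'N^'dx) \<le> norm w * 1" by simp
  qed
  then show ?thesis by (simp add: linear_continuous_on)
qed

lemma crux:
  fixes M :: "'w measure"
    and x :: "'N::finite \<Rightarrow> 'w \<Rightarrow> real^'dx::finite"
    and y :: "'N \<Rightarrow> 'w \<Rightarrow> real^'dy::finite"
    and e :: "'N \<Rightarrow> 'w \<Rightarrow> real^'dx"
  assumes P: "prob_space M"
    and card: "CARD('N) < CARD('dx)"
    and indep: "prob_space.indep_vars M (\<lambda>_. borel)
           (\<lambda>k \<omega>. case k of Inl i \<Rightarrow> (x i \<omega>, y i \<omega>) | Inr i \<Rightarrow> (e i \<omega>, 0)) UNIV"
    and ac: "absolutely_continuous lborel (distr M lborel (x k))"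
    and kS: "k \<notin> S"
    and xm: "x k \<in> borel_measurable M"
  shows "AE \<omega> in M. \<not> (\<exists>a. ZS S (\<lambda>i. x i \<omega> + e i \<omega>) *v a = x k \<omega> + e k \<omega>)"
proof -
  interpret prob_space M by (rule P)
  define R where "R = (\<lambda>k \<omega>. case k of Inl i \<Rightarrow> (x i \<omega>, y i \<omega>) | Inr i \<Rightarrow> (e i \<omega>, 0::real^'dy))"
  define L where "L = Inr ` insert k S \<union> Inl ` S"
  define B where "B = {Inl k :: 'N + 'N}"
  have ind0: "indep_var (PiM L (\<lambda>_. borel)) (\<lambda>\<omega>. restrict (\<lambda>l. R l \<omega>) L)
                        (PiM B (\<lambda>_. borel)) (\<lambda>\<omega>. restrict (\<lambda>l. R l \<omega>) B)"
    by (rule indep_var_restrict[OF indep[folded R_def]]) (use kS in \<open>auto simp: L_def B_def\<close>)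
  define h1 :: "('N + 'N \<Rightarrow> (real^'dx) \<times> (real^'dy)) \<Rightarrow> (real^'dx) \<times> (real^'N^'dx)" where
    "h1 F = (fst (F (Inr k)), (\<Sum>c\<in>S. emb c (fst (F (Inl c)) + fst (F (Inr c)))))" for F
  define h2 :: "('N + 'N \<Rightarrow> (real^'dx) \<times> (real^'dy)) \<Rightarrow> (real^'dx) \<times> (real^'N^'dx)" where
    "h2 F = (fst (F (Inl k)), 0)" for F
  have fstm: "(fst :: (real^'dx) \<times> (real^'dy) \<Rightarrow> real^'dx) \<in> borel_measurable borel"
    by (intro borel_measurable_continuous_onI continuous_intros)
  have embm: "\<And>c. (emb c :: real^'dx \<Rightarrow> real^'N^'dx) \<in> borel_measurable borel"
    by (intro borel_measurable_continuous_onI emb_cont)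
  have compL: "\<And>l. l \<in> L \<Longrightarrow> (\<lambda>F::'N + 'N \<Rightarrow> (real^'dx) \<times> (real^'dy). fst (F l)) \<in> borel_measurable (PiM L (\<lambda>_. borel))"
  proof -
    fix l assume l: "l \<in> L"
    show "(\<lambda>F::'N + 'N \<Rightarrow> (real^'dx) \<times> (real^'dy). fst (F l)) \<in> borel_measurable (PiM L (\<lambda>_. borel))"
      by (rule measurable_compose[OF measurable_component_singleton[OF l] fstm])
  qed
  have h1m: "h1 \<in> borel_measurable (PiM L (\<lambda>_. borel))"
  proof -
    have a: "(\<lambda>F::'N + 'N \<Rightarrow> (real^'dx) \<times> (real^'dy). fst (F (Inr k))) \<in> borel_measurable (PiM L (\<lambda>_. borel))"
      by (rule compL) (simp add: L_def)
    have b: "(\<lambda>F::'N + 'N \<Rightarrow> (real^'dx) \<times> (real^'dy). \<Sum>c\<in>S. emb c (fst (F (Inl c)) + fst (F (Inr c)))) \<in> borel_measurable (PiM L (\<lambda>_. borel))"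
    proof (rule borel_measurable_sum)
      fix c assume c: "c \<in> S"
      have "(\<lambda>F::'N + 'N \<Rightarrow> (real^'dx) \<times> (real^'dy). fst (F (Inl c)) + fst (F (Inr c))) \<in> borel_measurable (PiM L (\<lambda>_. borel))"
        by (intro borel_measurable_add compL) (use c in \<open>auto simp: L_def\<close>)
      then show "(\<lambda>F::'N + 'N \<Rightarrow> (real^'dx) \<times> (real^'dy). emb c (fst (F (Inl c)) + fst (F (Inr c)))) \<in> borel_measurable (PiM L (\<lambda>_. borel))"
        by (rule measurable_compose[OF _ embm])
    qed
    have "(\<lambda>F::'N + 'N \<Rightarrow> (real^'dx) \<times> (real^'dy). (fst (F (Inr k)), \<Sum>c\<in>S. emb c (fst (F (Inl c)) + fst (F (Inr c))))) \<in> measurable (PiM L (\<lambda>_. borel)) (borel \<Otimes>\<^sub>M borel)"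
      by (rule measurable_Pair[OF a b])
    then show ?thesis unfolding h1_def[abs_def] borel_prod .
  qed
  have h2m: "h2 \<in> borel_measurable (PiM B (\<lambda>_. borel))"
  proof -
    have "(\<lambda>F::'N + 'N \<Rightarrow> (real^'dx) \<times> (real^'dy). fst (F (Inl k))) \<in> borel_measurable (PiM B (\<lambda>_. borel))"
      by (rule measurable_compose[OF measurable_component_singleton[of "Inl k" B] fstm]) (simp add: B_def)
    then have "h2 \<in> measurable (PiM B (\<lambda>_. borel)) (borel \<Otimes>\<^sub>M borel)"
      unfolding h2_def[abs_def] by (intro measurable_Pair) auto
    then show ?thesis unfolding borel_prod .
  qed
  define W where "W \<omega> = (e k \<omega>, ZS S (\<lambda>i. x i \<omega> + e i \<omega>))" for \<omega>
  have eq1: "h1 \<circ> (\<lambda>\<omega>. restrict (\<lambda>l. R l \<omega>) L) = W"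
    by (rule ext) (simp add: h1_def W_def L_def R_def ZS_def)
  define X2 where "X2 \<omega> = (x k \<omega>, 0 :: real^'N^'dx)" for \<omega>
  have eq2: "h2 \<circ> (\<lambda>\<omega>. restrict (\<lambda>l. R l \<omega>) B) = X2"
    by (rule ext) (simp add: h2_def B_def R_def X2_def)
  have ind: "indep_var borel W borel X2"
    using indep_var_compose[OF ind0 h1m h2m] unfolding eq1 eq2 .
  have Wm: "W \<in> borel_measurable M" using ind by (rule indep_var_rv1)
  have X2m: "X2 \<in> borel_measurable M" using ind by (rule indep_var_rv2)
  have deq: "distr M borel W \<Otimes>\<^sub>M distr M borel X2 = distr M (borel \<Otimes>\<^sub>M borel) (\<lambda>\<omega>. (W \<omega>, X2 \<omega>))"
    using ind by (simp add: indep_var_distribution_eq)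
  interpret D1: prob_space "distr M borel W" by (rule prob_space_distr[OF Wm])
  interpret D2: prob_space "distr M borel X2" by (rule prob_space_distr[OF X2m])
  interpret D12: pair_prob_space "distr M borel W" "distr M borel X2" ..
  define T where "T = {p :: ((real^'dx) \<times> (real^'N^'dx)) \<times> ((real^'dx) \<times> (real^'N^'dx)).
                      (fst (snd p) + fst (fst p), snd (fst p)) \<in> Rng}"
  have Tb: "T \<in> sets borel"
  proof -
    let ?g = "\<lambda>p :: ((real^'dx) \<times> (real^'N^'dx)) \<times> ((real^'dx) \<times> (real^'N^'dx)). (fst (snd p) + fst (fst p), snd (fst p))"
    have "?g \<in> borel_measurable borel"
      by (intro borel_measurable_continuous_onI continuous_intros)
    from measurable_sets[OF this Rng_borel] show ?thesis by (simp add: T_def vimage_def)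
  qed
  have sets12: "sets (distr M borel W \<Otimes>\<^sub>M distr M borel X2) = sets (borel :: (((real^'dx) \<times> (real^'N^'dx)) \<times> ((real^'dx) \<times> (real^'N^'dx))) measure)"
  proof -
    have "sets (distr M borel W \<Otimes>\<^sub>M distr M borel X2) = sets (borel \<Otimes>\<^sub>M (borel :: ((real^'dx) \<times> (real^'N^'dx)) measure))"
      by (rule sets_pair_measure_cong) simp_all
    then show ?thesis by (simp only: borel_prod)
  qed
  have space12: "space (distr M borel W \<Otimes>\<^sub>M distr M borel X2) = UNIV"
    by (simp add: space_pair_measure)
  have Tc: "{p \<in> space (distr M borel W \<Otimes>\<^sub>M distr M borel X2). p \<notin> T} \<in> sets (distr M borel W \<Otimes>\<^sub>M distr M borel X2)"
    unfolding sets12 space12 using Tb by (simp add: Compl_eq[symmetric] sets.compl_sets[of T borel, simplified])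
  have xkm: "x k \<in> measurable M lborel"
    using xm measurable_cong_sets[OF refl sets_lborel, of M] by simp
  have inner: "\<And>w. AE a in distr M borel X2. (w, a) \<notin> T"
  proof -
    fix w :: "(real^'dx) \<times> (real^'N^'dx)"
    define N0 where "N0 = {a. (a + fst w, snd w) \<in> Rng}"
    have N0neg: "negligible N0" unfolding N0_def by (rule Rng_section_negligible[OF card])
    have N0b: "N0 \<in> sets borel"
    proof -
      have "(\<lambda>a::real^'dx. (a + fst w, snd w)) \<in> borel_measurable borel"
        by (intro borel_measurable_continuous_onI continuous_intros)
      from measurable_sets[OF this Rng_borel] show ?thesis by (simp add: N0_def vimage_def)
    qed
    have "N0 \<in> null_sets lborel"
      using N0neg N0b null_sets_completion_iff[of N0 lborel] by (simp add: negligible_iff_null_sets)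
    then have "N0 \<in> null_sets (distr M lborel (x k))"
      using ac unfolding absolutely_continuous_def by blast
    then have "emeasure (distr M lborel (x k)) N0 = 0" by auto
    then have z: "emeasure M (x k -` N0 \<inter> space M) = 0"
      using emeasure_distr[OF xkm, of N0] N0b by simp
    define N1 where "N1 = {a :: (real^'dx) \<times> (real^'N^'dx). fst a \<in> N0}"
    have N1b: "N1 \<in> sets borel"
    proof -
      have "(fst :: (real^'dx) \<times> (real^'N^'dx) \<Rightarrow> real^'dx) \<in> borel_measurable borel"
        by (intro borel_measurable_continuous_onI continuous_intros)
      from measurable_sets[OF this N0b] show ?thesis by (simp add: N1_def vimage_def)
    qed
    have "X2 -` N1 \<inter> space M = x k -` N0 \<inter> space M" by (auto simp: N1_def X2_def)
    then have "emeasure (distr M borel X2) N1 = 0"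
      using z N1b by (simp add: emeasure_distr[OF X2m])
    then have "N1 \<in> null_sets (distr M borel X2)" using N1b by auto
    moreover have "{a \<in> space (distr M borel X2). \<not> (w, a) \<notin> T} \<subseteq> N1"
      by (auto simp: T_def N1_def N0_def)
    ultimately show "AE a in distr M borel X2. (w, a) \<notin> T" by (rule AE_I')
  qed
  have "AE p in distr M borel W \<Otimes>\<^sub>M distr M borel X2. p \<notin> T"
    by (rule D12.AE_pair_measure[OF Tc]) (simp add: inner)
  then have "AE p in distr M (borel \<Otimes>\<^sub>M borel) (\<lambda>\<omega>. (W \<omega>, X2 \<omega>)). p \<notin> T" unfolding deq[symmetric] .
  moreover have "(\<lambda>\<omega>. (W \<omega>, X2 \<omega>)) \<in> measurable M (borel \<Otimes>\<^sub>M borel)"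
    by (rule measurable_Pair[OF Wm X2m])
  moreover have "{p \<in> space (borel \<Otimes>\<^sub>M borel). p \<notin> T} \<in> sets (borel \<Otimes>\<^sub>M borel)"
    using Tc unfolding sets12 space12 borel_prod by simp
  ultimately have "AE \<omega> in M. (W \<omega>, X2 \<omega>) \<notin> T" by (simp add: AE_distr_iff)
  then show ?thesis
    by (rule AE_mp) (auto simp: T_def W_def X2_def Rng_def)
qed



lemma colmat_mult: "colmat v *v c = (\<Sum>i\<in>UNIV. c$i *\<^sub>R v i)"
  by (simp add: colmat_def vec_eq_iff matrix_vector_mult_def sum_component mult.commute)

definition IO :: "'N::finite set \<Rightarrow> ('N \<Rightarrow> real^'dx::finite) \<Rightarrow> bool" where
  "IO S z \<longleftrightarrow> (\<forall>c::real^'N. (\<Sum>i\<in>S. c$i *\<^sub>R z i) = 0 \<longrightarrow> (\<forall>i\<in>S. c$i = 0))"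

lemma IO_insert:
  fixes z :: "'N::finite \<Rightarrow> real^'dx::finite"
  assumes "k \<notin> S" "IO S z" "\<not> (\<exists>a. ZS S z *v a = z k)"
  shows "IO (insert k S) z"
  unfolding IO_def
proof (intro allI impI)
  fix c :: "real^'N" assume c: "(\<Sum>i\<in>insert k S. c$i *\<^sub>R z i) = 0"
  then have c': "c$k *\<^sub>R z k + (\<Sum>i\<in>S. c$i *\<^sub>R z i) = 0" using assms(1) by simp
  have ck: "c$k = 0"
  proof (rule ccontr)
    assume nz: "c$k \<noteq> 0"
    define a where "a = (\<chi> j. - c$j / c$k)"
    have "ZS S z *v a = (\<Sum>j\<in>S. (- c$j / c$k) *\<^sub>R z j)" by (simp add: ZS_mult a_def)
    also have "\<dots> = (- 1 / c$k) *\<^sub>R (\<Sum>j\<in>S. c$j *\<^sub>R z j)"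
      by (simp add: scaleR_sum_right)
    also have "(\<Sum>j\<in>S. c$j *\<^sub>R z j) = - (c$k *\<^sub>R z k)" using c' by (simp add: eq_neg_iff_add_eq_0 add.commute)
    finally have "ZS S z *v a = z k" using nz by simp
    then show False using assms(3) by blast
  qed
  then have "(\<Sum>i\<in>S. c$i *\<^sub>R z i) = 0" using c' by simp
  then have "\<forall>i\<in>S. c$i = 0" using assms(2) unfolding IO_def by blast
  then show "\<forall>i\<in>insert k S. c$i = 0" using ck by simp
qed

lemma IO_invertible:
  assumes "IO (UNIV::'N::finite set) (z :: 'N \<Rightarrow> real^'dx::finite)"
  shows "invertible (transpose (colmat z) ** colmat z)"
proof -
  let ?X = "colmat z" let ?G = "transpose ?X ** ?X"
  have injX: "\<And>c. ?X *v c = 0 \<Longrightarrow> c = 0"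
    using assms unfolding IO_def colmat_mult by (simp add: vec_eq_iff)
  have "inj ((*v) ?G)"
  proof (rule injI)
    fix c d assume "?G *v c = ?G *v d"
    then have g: "?G *v (c - d) = 0" by (simp add: matrix_vector_mult_diff_distrib)
    have "inner (?X *v (c - d)) (?X *v (c - d)) = inner (c - d) (?G *v (c - d))"
      by (simp add: inner_vec_def matrix_vector_mult_def matrix_matrix_mult_def transpose_def
          sum_distrib_left sum_distrib_right mult_ac sum.swap[of _ "UNIV::'dx set"])
    then have "?X *v (c - d) = 0" using g by simp
    then show "c = d" using injX by fastforce
  qed
  then obtain B where "B ** ?G = mat 1" using matrix_left_invertible_injective by blast
  then show ?thesis using invertible_left_inverse by blast
qed

lemma AE_invertible:
  fixes M :: "'w measure"
    and x :: "'N::finite \<Rightarrow> 'w \<Rightarrow> real^'dx::finite"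
    and y :: "'N \<Rightarrow> 'w \<Rightarrow> real^'dy::finite"
    and e :: "'N \<Rightarrow> 'w \<Rightarrow> real^'dx"
  assumes P: "prob_space M"
    and card: "CARD('N) < CARD('dx)"
    and xm: "\<And>i. x i \<in> borel_measurable M"
    and indep: "prob_space.indep_vars M (\<lambda>_. borel)
           (\<lambda>k \<omega>. case k of Inl i \<Rightarrow> (x i \<omega>, y i \<omega>) | Inr i \<Rightarrow> (e i \<omega>, 0)) UNIV"
    and ac: "\<And>i. absolutely_continuous lborel (distr M lborel (x i))"
  shows "AE \<omega> in M. invertible (transpose (colmat (\<lambda>i. x i \<omega> + e i \<omega>)) ** colmat (\<lambda>i. x i \<omega> + e i \<omega>))"
proof -
  have "AE \<omega> in M. IO S (\<lambda>i. x i \<omega> + e i \<omega>)" if "finite S" for S :: "'N set"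
    using that
  proof (induction S rule: finite_induct)
    case empty
    show ?case by (simp add: IO_def)
  next
    case (insert k S)
    have "AE \<omega> in M. \<not> (\<exists>a. ZS S (\<lambda>i. x i \<omega> + e i \<omega>) *v a = x k \<omega> + e k \<omega>)"
      by (rule crux[OF P card indep ac insert(2) xm])
    with insert(3) show ?case
      by eventually_elim (rule IO_insert[OF insert(2)], auto)
  qed
  from this[of UNIV] show ?thesis by (auto elim: AE_mp intro: IO_invertible)
qed



theorem mainTheorem2:
  fixes M :: "'w measure"
    and x :: "'N::finite \<Rightarrow> 'w \<Rightarrow> real^'dx::finite"
    and y :: "'N \<Rightarrow> 'w \<Rightarrow> real^'dy::finite"
    and e :: "'N \<Rightarrow> 'w \<Rightarrow> real^'dx"
  assumes "prob_space M"
    and "CARD('N) < CARD('dx)"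
    and "\<And>i. x i \<in> borel_measurable M"
    and "\<And>i. y i \<in> borel_measurable M"
    and "\<And>i. e i \<in> borel_measurable M"
    and "prob_space.indep_vars M (\<lambda>_. borel)
           (\<lambda>k \<omega>. case k of Inl i \<Rightarrow> (x i \<omega>, y i \<omega>) | Inr i \<Rightarrow> (e i \<omega>, 0)) UNIV"
    and "\<And>i. absolutely_continuous lborel (distr M lborel (x i))"
    and "\<And>i. absolutely_continuous lborel (distr M lborel (e i))"
  shows "AE \<omega> in M.
    (let Xe = colmat (\<lambda>i. x i \<omega> + e i \<omega>); Y = colmat (\<lambda>i. y i \<omega>);
         p = pdim TYPE('dx) TYPE('d1::finite) TYPE('dy) in
     unique_best_rank_approx p Y \<longrightarrow>
     (\<forall>u \<delta> (W2 :: real \<Rightarrow> real^'d1^'dy) (W1 :: real \<Rightarrow> real^'dx^'d1) A2 A1.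
        top_eigvecs (Y ** transpose Y) p u \<and>
        \<delta> > 0 \<and>
        is_gradient_flow (Lbase Xe Y) (\<lambda>t. (W2 t, W1 t)) \<and>
        transpose (W2 0) ** W2 0 = W1 0 ** transpose (W1 0) \<and>
        frob (W1 0) \<le> \<delta> \<and> frob (W2 0) \<le> \<delta> \<and>
        ((\<lambda>t. (W2 t, W1 t)) \<longlongrightarrow> (A2, A1)) at_top \<and>
        (\<forall>B :: (real^'d1^'dy) \<times> (real^'dx^'d1). Lbase Xe Y (A2, A1) \<le> Lbase Xe Y B)
        \<longrightarrow>
        (let Wstar = projU p u ** Y ** matrix_inv (transpose Xe ** Xe) ** transpose Xe;
             \<gamma> = frob Wstar in
         \<exists>Wd. ((\<lambda>t. W2 t ** W1 t) \<longlongrightarrow> Wstar + Wd) at_top \<and>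
              frob Wd \<le> (sqrt (real p) * \<delta> + real p powr (1/4) * sqrt \<gamma>) * \<delta>)))"
proof -
  have AEinv: "AE \<omega> in M. invertible (transpose (colmat (\<lambda>i. x i \<omega> + e i \<omega>)) ** colmat (\<lambda>i. x i \<omega> + e i \<omega>))"
    by (rule AE_invertible[OF assms(1,2,3,6,7)])
  show ?thesis
  proof (rule AE_mp[OF AEinv], rule AE_I2, intro impI)
    fix \<omega>
    assume inv: "invertible (transpose (colmat (\<lambda>i. x i \<omega> + e i \<omega>)) ** colmat (\<lambda>i. x i \<omega> + e i \<omega>))"
    show "let Xe = colmat (\<lambda>i. x i \<omega> + e i \<omega>); Y = colmat (\<lambda>i. y i \<omega>);
         p = pdim TYPE('dx) TYPE('d1::finite) TYPE('dy) in
     unique_best_rank_approx p Y \<longrightarrow>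
     (\<forall>u \<delta> (W2 :: real \<Rightarrow> real^'d1^'dy) (W1 :: real \<Rightarrow> real^'dx^'d1) A2 A1.
        top_eigvecs (Y ** transpose Y) p u \<and>
        \<delta> > 0 \<and>
        is_gradient_flow (Lbase Xe Y) (\<lambda>t. (W2 t, W1 t)) \<and>
        transpose (W2 0) ** W2 0 = W1 0 ** transpose (W1 0) \<and>
        frob (W1 0) \<le> \<delta> \<and> frob (W2 0) \<le> \<delta> \<and>
        ((\<lambda>t. (W2 t, W1 t)) \<longlongrightarrow> (A2, A1)) at_top \<and>
        (\<forall>B :: (real^'d1^'dy) \<times> (real^'dx^'d1). Lbase Xe Y (A2, A1) \<le> Lbase Xe Y B)
        \<longrightarrow>
        (let Wstar = projU p u ** Y ** matrix_inv (transpose Xe ** Xe) ** transpose Xe;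
             \<gamma> = frob Wstar in
         \<exists>Wd. ((\<lambda>t. W2 t ** W1 t) \<longlongrightarrow> Wstar + Wd) at_top \<and>
              frob Wd \<le> (sqrt (real p) * \<delta> + real p powr (1/4) * sqrt \<gamma>) * \<delta>))"
      unfolding Let_def
    proof (intro impI allI)
      fix u \<delta> and W2 :: "real \<Rightarrow> real^'d1^'dy" and W1 :: "real \<Rightarrow> real^'dx^'d1" and A2 A1
      assume uniq: "unique_best_rank_approx (pdim TYPE('dx) TYPE('d1) TYPE('dy)) (colmat (\<lambda>i. y i \<omega>))"
      assume H: "top_eigvecs (colmat (\<lambda>i. y i \<omega>) ** transpose (colmat (\<lambda>i. y i \<omega>))) (pdim TYPE('dx) TYPE('d1) TYPE('dy)) u \<and>
        \<delta> > 0 \<and>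
        is_gradient_flow (Lbase (colmat (\<lambda>i. x i \<omega> + e i \<omega>)) (colmat (\<lambda>i. y i \<omega>))) (\<lambda>t. (W2 t, W1 t)) \<and>
        transpose (W2 0) ** W2 0 = W1 0 ** transpose (W1 0) \<and>
        frob (W1 0) \<le> \<delta> \<and> frob (W2 0) \<le> \<delta> \<and>
        ((\<lambda>t. (W2 t, W1 t)) \<longlongrightarrow> (A2, A1)) at_top \<and>
        (\<forall>B :: (real^'d1^'dy) \<times> (real^'dx^'d1). Lbase (colmat (\<lambda>i. x i \<omega> + e i \<omega>)) (colmat (\<lambda>i. y i \<omega>)) (A2, A1) \<le> Lbase (colmat (\<lambda>i. x i \<omega> + e i \<omega>)) (colmat (\<lambda>i. y i \<omega>)) B)"
      show "\<exists>Wd. ((\<lambda>t. W2 t ** W1 t) \<longlongrightarrow> projU (pdim TYPE('dx) TYPE('d1) TYPE('dy)) u ** colmat (\<lambda>i. y i \<omega>) ** matrix_inv (transpose (colmat (\<lambda>i. x i \<omega> + e i \<omega>)) ** colmat (\<lambda>i. x i \<omega> + e i \<omega>)) ** transpose (colmat (\<lambda>i. x i \<omega> + e i \<omega>)) + Wd) at_top \<and>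
              frob Wd \<le> (sqrt (real (pdim TYPE('dx) TYPE('d1) TYPE('dy))) * \<delta> + real (pdim TYPE('dx) TYPE('d1) TYPE('dy)) powr (1/4) * sqrt (frob (projU (pdim TYPE('dx) TYPE('d1) TYPE('dy)) u ** colmat (\<lambda>i. y i \<omega>) ** matrix_inv (transpose (colmat (\<lambda>i. x i \<omega> + e i \<omega>)) ** colmat (\<lambda>i. x i \<omega> + e i \<omega>)) ** transpose (colmat (\<lambda>i. x i \<omega> + e i \<omega>))))) * \<delta>"
        using H by (intro det_core[OF inv uniq refl]) auto
    qed
  qed
qed


end
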